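(* The diagram of graded algebra morphisms \[\Delta^{\mathcal{W},\mathrm{DR}}\circ\beta_1=\beta_2\circ\mathrm{gr}(\Delta^{\mathcal{W},\mathrm{B}}):\ \mathrm{gr}(\mathcal{W}^{\mathrm{B}})\to\mathcal{W}^{\mathrm{DR}}\otimes\mathcal{W}^{\mathrm{DR}}\] commutes, where $\beta_1:\mathrm{gr}(\mathcal{W}^{\mathrm{B}})\xrightarrow{\sim}\mathcal{W}^{\mathrm{DR}}$ and $\beta_2:\mathrm{gr}(\mathcal{W}^{\mathrm{B}}\otimes\mathcal{W}^{\mathrm{B}})\xrightarrow{\sim}\mathcal{W}^{\mathrm{DR}}\otimes\mathcal{W}^{\mathrm{DR}}$ are the isomorphisms induced by $\mathrm{gr}\,\mathcal{V}^{\mathrm{B}}\cong\mathcal{V}^{\mathrm{DR}}$.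
   Context: $\mathbf{k}$ is a commutative $\mathbb{Q}$-algebra. $F_2$ free on $X_0,X_1$, $\mathcal{V}^{\mathrm{B}}=\mathbf{k}F_2$ filtered by powers of the augmentation ideal; $\mathfrak{f}_2$ free graded Lie algebra on $e_0,e_1$ (degree 1), $\mathcal{V}^{\mathrm{DR}}=U(\mathfrak{f}_2)$; $\mathrm{gr}\,\mathcal{V}^{\mathrm{B}}\cong\mathcal{V}^{\mathrm{DR}}$ via $[X_i-1]_1\mapsto e_i$ (known). $\mathcal{W}^{\mathrm{B}}=\mathbf{k}\oplus\mathcal{V}^{\mathrm{B}}(X_1-1)$, a subalgebra generated by $X_1^{-1}$ and $X_0^n(X_1-1)$ ($n\in\mathbb{Z}$), with filtration induced from $\mathcal{V}^{\mathrm{B}}$, and $\mathcal{W}^{\mathrm{B}}\otimes\mathcal{W}^{\mathrm{B}}$ with the tensor product filtration $F^n=\sum_{i+j=n}F^i\otimes F^j$; $\mathcal{W}^{\mathrm{DR}}=\mathbf{k}\oplus\mathcal{V}^{\mathrm{DR}}e_1$, freely generated by $e_0^ne_1$ ($n\ge0$). It is known that the isomorphism $\mathrm{gr}\,\mathcal{V}^{\mathrm{B}}\cong\mathcal{V}^{\mathrm{DR}}$ induces graded algebra isomorphisms $\beta_1,\beta_2$ as in the claim. $\Delta^{\mathcal{W},\mathrm{B}}:\mathcal{W}^{\mathrm{B}}\to\mathcal{W}^{\mathrm{B}}\otimes\mathcal{W}^{\mathrm{B}}$ is the filtered algebra morphism with $X_1^{-1}\mapsto X_1^{-1}\otimes X_1^{-1}$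 and $X_0^n(X_1-1)\mapsto X_0^n(X_1-1)\otimes1+1\otimes X_0^n(X_1-1)-\sum_{k=1}^{n-1}X_0^k(X_1-1)\otimes X_0^{n-k}(X_1-1)$ ($n\in\mathbb{Z}$; convention $\sum_{k=p}^q f(k)$ equals $f(p)+\dots+f(q)$ if $q>p-1$, $0$ if $q=p-1$, $-f(p-1)-\dots-f(q+1)$ if $q<p-1$). $\Delta^{\mathcal{W},\mathrm{DR}}:\mathcal{W}^{\mathrm{DR}}\to\mathcal{W}^{\mathrm{DR}}\otimes\mathcal{W}^{\mathrm{DR}}$ is the algebra morphism with $e_0^ne_1\mapsto e_0^ne_1\otimes1+1\otimes e_0^ne_1-\sum_{k=0}^{n-1}e_0^ke_1\otimes e_0^{n-k-1}e_1$. $\mathrm{gr}$ denotes the associated graded ($\mathrm{gr}_n=F^n/F^{n+1}$) of filtered objects and morphisms. *)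

theory Defs
  imports Main "HOL-Library.Poly_Mapping"
begin

text \<open>A letter is (i, inv): i = False means X0, i = True means X1;
  inv = True means the inverse letter.\<close>
type_synonym letter = "bool \<times> bool"

fun red_cons :: "letter \<Rightarrow> letter list \<Rightarrow> letter list" where
  "red_cons a [] = [a]"
| "red_cons a (b # zs) = (if fst a = fst b \<and> snd a \<noteq> snd b then zs else a # b # zs)"

definition red :: "letter list \<Rightarrow> letter list" where
  "red xs = foldr red_cons xs []"

definition reduced :: "letter list \<Rightarrow> bool" where
  "reduced w \<longleftrightarrow> red w = w"

definition conv :: "('a \<Rightarrow> 'a \<Rightarrow> 'a) \<Rightarrow> ('a \<Rightarrow>\<^sub>0 'k::comm_ring_1) \<Rightarrow> ('a \<Rightarrow>\<^sub>0 'k) \<Rightarrow> ('a \<Rightarrow>\<^sub>0 'k)" where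
  "conv op f g = (\<Sum>u\<in>Poly_Mapping.keys f. \<Sum>v\<in>Poly_Mapping.keys g. Poly_Mapping.single (op u v) (Poly_Mapping.lookup f u * Poly_Mapping.lookup g v))"

definition smult :: "'k::comm_ring_1 \<Rightarrow> ('a \<Rightarrow>\<^sub>0 'k) \<Rightarrow> ('a \<Rightarrow>\<^sub>0 'k)" where
  "smult c f = Poly_Mapping.map (\<lambda>x. c * x) f"

definition tens :: "('a \<Rightarrow>\<^sub>0 'k::comm_ring_1) \<Rightarrow> ('a \<Rightarrow>\<^sub>0 'k) \<Rightarrow> ('a \<times> 'a \<Rightarrow>\<^sub>0 'k)" where
  "tens f g = (\<Sum>u\<in>Poly_Mapping.keys f. \<Sum>v\<in>Poly_Mapping.keys g. Poly_Mapping.single (u, v) (Poly_Mapping.lookup f u * Poly_Mapping.lookup g v))"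

inductive_set addspan :: "('a::monoid_add) set \<Rightarrow> 'a set" for S where
  zero: "0 \<in> addspan S"
| gen: "x \<in> S \<Longrightarrow> x \<in> addspan S"
| add: "x \<in> addspan S \<Longrightarrow> y \<in> addspan S \<Longrightarrow> x + y \<in> addspan S"

definition prodspan :: "('a \<Rightarrow> 'a \<Rightarrow> 'a::monoid_add) \<Rightarrow> 'a set \<Rightarrow> 'a set \<Rightarrow> 'a set" where
  "prodspan m A B = addspan {m a b | a b. a \<in> A \<and> b \<in> B}"

section \<open>Betti side: V^B = k F2, W^B, filtrations, tensor square\<close>

definition VB :: "(letter list \<Rightarrow>\<^sub>0 'k::comm_ring_1) set" where
  "VB = {f. \<forall>u\<in>Poly_Mapping.keys f. reduced u}"

definition mulB :: "(letter list \<Rightarrow>\<^sub>0 'k::comm_ring_1) \<Rightarrow> _ \<Rightarrow> _" where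
  "mulB = conv (\<lambda>u v. red (u @ v))"

definition oneB :: "letter list \<Rightarrow>\<^sub>0 'k::comm_ring_1" where
  "oneB = Poly_Mapping.single [] 1"

definition X1 :: "letter list \<Rightarrow>\<^sub>0 'k::comm_ring_1" where
  "X1 = Poly_Mapping.single [(True, False)] 1"

definition X1inv :: "letter list \<Rightarrow>\<^sub>0 'k::comm_ring_1" where
  "X1inv = Poly_Mapping.single [(True, True)] 1"

definition X0pow :: "int \<Rightarrow> letter list \<Rightarrow>\<^sub>0 'k::comm_ring_1" where
  "X0pow n = Poly_Mapping.single (replicate (nat \<bar>n\<bar>) (False, n < 0)) 1"

definition genB :: "int \<Rightarrow> letter list \<Rightarrow>\<^sub>0 'k::comm_ring_1" where
  "genB n = mulB (X0pow n) (X1 - oneB)"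

definition augm :: "(letter list \<Rightarrow>\<^sub>0 'k::comm_ring_1) \<Rightarrow> 'k" where
  "augm f = (\<Sum>u\<in>Poly_Mapping.keys f. Poly_Mapping.lookup f u)"

definition augI :: "(letter list \<Rightarrow>\<^sub>0 'k::comm_ring_1) set" where
  "augI = {f \<in> VB. augm f = 0}"

fun filV :: "nat \<Rightarrow> (letter list \<Rightarrow>\<^sub>0 'k::comm_ring_1) set" where
  "filV 0 = VB"
| "filV (Suc n) = prodspan mulB augI (filV n)"

definition WB :: "(letter list \<Rightarrow>\<^sub>0 'k::comm_ring_1) set" where
  "WB = {smult c oneB + mulB y (X1 - oneB) | c y. y \<in> VB}"

definition filW :: "nat \<Rightarrow> (letter list \<Rightarrow>\<^sub>0 'k::comm_ring_1) set" where
  "filW n = WB \<inter> filV n"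

text \<open>W^B \<otimes> W^B, realised inside k[F2 \<times> F2] = V^B \<otimes> V^B, with the tensor product
  filtration F^n = sum over i+j=n of F^i \<otimes> F^j.\<close>
definition WWB :: "(letter list \<times> letter list \<Rightarrow>\<^sub>0 'k::comm_ring_1) set" where
  "WWB = addspan {tens a b | a b. a \<in> WB \<and> b \<in> WB}"

definition filWW :: "nat \<Rightarrow> (letter list \<times> letter list \<Rightarrow>\<^sub>0 'k::comm_ring_1) set" where
  "filWW n = addspan {tens a b | a b i j. i + j = n \<and> a \<in> filW i \<and> b \<in> filW j}"

definition mulBB :: "(letter list \<times> letter list \<Rightarrow>\<^sub>0 'k::comm_ring_1) \<Rightarrow> _ \<Rightarrow> _" where
  "mulBB = conv (\<lambda>(a, b) (c, d). (red (a @ c), red (b @ d)))"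

definition csum :: "int \<Rightarrow> int \<Rightarrow> (int \<Rightarrow> 'a::ab_group_add) \<Rightarrow> 'a" where
  "csum p q f = (if q \<ge> p - 1 then (\<Sum>k\<in>{p..q}. f k) else - (\<Sum>k\<in>{q+1..p-1}. f k))"

section \<open>de Rham side: V^DR = U(f2) = free algebra on e0, e1\<close>

text \<open>Words in e0 (False), e1 (True).\<close>
definition mulD :: "(bool list \<Rightarrow>\<^sub>0 'k::comm_ring_1) \<Rightarrow> _ \<Rightarrow> _" where
  "mulD = conv (@)"

definition mulDD :: "(bool list \<times> bool list \<Rightarrow>\<^sub>0 'k::comm_ring_1) \<Rightarrow> _ \<Rightarrow> _" where
  "mulDD = conv (\<lambda>(a, b) (c, d). (a @ c, b @ d))"

definition oneD :: "bool list \<Rightarrow>\<^sub>0 'k::comm_ring_1" where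
  "oneD = Poly_Mapping.single [] 1"

definition e1 :: "bool list \<Rightarrow>\<^sub>0 'k::comm_ring_1" where
  "e1 = Poly_Mapping.single [True] 1"

definition genD :: "nat \<Rightarrow> bool list \<Rightarrow>\<^sub>0 'k::comm_ring_1" where
  "genD n = Poly_Mapping.single (replicate n False @ [True]) 1"

definition WDR :: "(bool list \<Rightarrow>\<^sub>0 'k::comm_ring_1) set" where
  "WDR = {smult c oneD + mulD y e1 | c y. True}"

text \<open>Coefficient of the word w in the Magnus expansion X_i \<mapsto> 1 + e_i,
  X_i^{-1} \<mapsto> sum_k (-e_i)^k of a group word.  The degree-n part of this expansion
  of an element of F^n is the image of its class under gr_n V^B = V^DR_n
  (which sends [X_i - 1]_1 to e_i).\<close>
fun magc :: "letter list \<Rightarrow> bool list \<Rightarrow> 'k::comm_ring_1" where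
  "magc [] w = (if w = [] then 1 else 0)"
| "magc (a # g) w =
     (if snd a then (\<Sum>k\<in>{0..length w}. if take k w = replicate k (fst a)
                                          then (-1) ^ k * magc g (drop k w) else 0)
      else magc g w + (case w of [] \<Rightarrow> 0 | b # w' \<Rightarrow> if b = fst a then magc g w' else 0))"

definition beta1 :: "nat \<Rightarrow> (letter list \<Rightarrow>\<^sub>0 'k::comm_ring_1) \<Rightarrow> (bool list \<Rightarrow>\<^sub>0 'k)" where
  "beta1 n f = (\<Sum>w\<in>{w. length w = n}.
       Poly_Mapping.single w (\<Sum>u\<in>Poly_Mapping.keys f. Poly_Mapping.lookup f u * magc u w))"

definition beta2 :: "nat \<Rightarrow> (letter list \<times> letter list \<Rightarrow>\<^sub>0 'k::comm_ring_1)
                        \<Rightarrow> (bool list \<times> bool list \<Rightarrow>\<^sub>0 'k)" where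
  "beta2 n f = (\<Sum>p\<in>{(u, v). length u + length v = n}.
       Poly_Mapping.single p (\<Sum>q\<in>Poly_Mapping.keys f. Poly_Mapping.lookup f q * magc (fst q) (fst p) * magc (snd q) (snd p)))"

definition is_DeltaB :: "((letter list \<Rightarrow>\<^sub>0 'k::comm_ring_1) \<Rightarrow> (letter list \<times> letter list \<Rightarrow>\<^sub>0 'k)) \<Rightarrow> bool" where
  "is_DeltaB D \<longleftrightarrow>
     (\<forall>x\<in>WB. \<forall>y\<in>WB. D (x + y) = D x + D y \<and> D (mulB x y) = mulBB (D x) (D y)) \<and>
     (\<forall>c. \<forall>x\<in>WB. D (smult c x) = smult c (D x)) \<and>
     D oneB = tens oneB oneB \<and>
     D X1inv = tens X1inv X1inv \<and>
     (\<forall>n::int. D (genB n) = tens (genB n) oneB + tens oneB (genB n)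
                            - csum 1 (n - 1) (\<lambda>k. tens (genB k) (genB (n - k)))) \<and>
     (\<forall>n. \<forall>x\<in>filW n. D x \<in> filWW n)"

definition is_DeltaDR :: "((bool list \<Rightarrow>\<^sub>0 'k::comm_ring_1) \<Rightarrow> (bool list \<times> bool list \<Rightarrow>\<^sub>0 'k)) \<Rightarrow> bool" where
  "is_DeltaDR D \<longleftrightarrow>
     (\<forall>x\<in>WDR. \<forall>y\<in>WDR. D (x + y) = D x + D y \<and> D (mulD x y) = mulDD (D x) (D y)) \<and>
     (\<forall>c. \<forall>x\<in>WDR. D (smult c x) = smult c (D x)) \<and>
     D oneD = tens oneD oneD \<and>
     (\<forall>n. D (genD n) = tens (genD n) oneD + tens oneD (genD n)
                       - (\<Sum>k<n. tens (genD k) (genD (n - k - 1))))"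

end

theory Submission
  imports Defs
begin

abbreviation lk :: "('a \<Rightarrow>\<^sub>0 'b::zero) \<Rightarrow> 'a \<Rightarrow> 'b" where "lk \<equiv> Poly_Mapping.lookup"
abbreviation ks :: "('a \<Rightarrow>\<^sub>0 'b::zero) \<Rightarrow> 'a set" where "ks \<equiv> Poly_Mapping.keys"

lemma lk_single: "lk (Poly_Mapping.single a c) x = (if x = a then c else 0)"
  by (simp add: lookup_single when_def)

lemma lk_smult[simp]: "lk (smult c f) x = c * lk f x"
  by (simp add: smult_def Poly_Mapping.map.rep_eq when_def)

lemma ks_smult: "ks (smult c f) \<subseteq> ks f"
  by (auto simp: in_keys_iff)

lemma pm_decomp: "f = (\<Sum>u\<in>ks f. Poly_Mapping.single u (lk f u))"
  by (rule poly_mapping_eqI) (simp add: lookup_sum lk_single in_keys_iff)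

lemma lookup_conv:
  "lk (conv op f g) x = (\<Sum>u\<in>ks f. \<Sum>v\<in>ks g. if op u v = x then lk f u * lk g v else 0)"
  unfolding conv_def by (simp add: lookup_sum lk_single) (intro sum.cong refl, auto)

lemma lookup_conv_gen:
  assumes "finite A" "ks f \<subseteq> A" "finite B" "ks g \<subseteq> B"
  shows "lk (conv op f g) x = (\<Sum>u\<in>A. \<Sum>v\<in>B. if op u v = x then lk f u * lk g v else 0)"
proof -
  have "lk (conv op f g) x = (\<Sum>u\<in>ks f. \<Sum>v\<in>ks g. if op u v = x then lk f u * lk g v else 0)"
    by (rule lookup_conv)
  also have "\<dots> = (\<Sum>u\<in>A. \<Sum>v\<in>ks g. if op u v = x then lk f u * lk g v else 0)"
    by (rule sum.mono_neutral_left) (use assms in \<open>auto simp: in_keys_iff intro!: sum.neutral\<close>)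
  also have "\<dots> = (\<Sum>u\<in>A. \<Sum>v\<in>B. if op u v = x then lk f u * lk g v else 0)"
    by (intro sum.cong refl sum.mono_neutral_left) (use assms in \<open>auto simp: in_keys_iff\<close>)
  finally show ?thesis .
qed

lemma ks_conv: "ks (conv op f g) \<subseteq> (\<lambda>(u,v). op u v) ` (ks f \<times> ks g)"
proof
  fix x assume "x \<in> ks (conv op f g)"
  hence "lk (conv op f g) x \<noteq> 0" by (simp add: in_keys_iff)
  then obtain u where "u \<in> ks f" "(\<Sum>v\<in>ks g. if op u v = x then lk f u * lk g v else 0) \<noteq> 0"
    unfolding lookup_conv using sum.not_neutral_contains_not_neutral by blast
  then obtain v where "v \<in> ks g" "(if op u v = x then lk f u * lk g v else 0) \<noteq> 0"
    using sum.not_neutral_contains_not_neutral by blast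
  hence "u \<in> ks f" "v \<in> ks g" "op u v = x" using \<open>u \<in> ks f\<close> by (auto split: if_splits)
  thus "x \<in> (\<lambda>(u,v). op u v) ` (ks f \<times> ks g)" by force
qed

lemma conv_add1: "conv op (f1 + f2) g = conv op f1 g + conv op f2 g"
proof (rule poly_mapping_eqI)
  fix x
  let ?A = "ks f1 \<union> ks f2"
  have A: "finite ?A" "ks (f1+f2) \<subseteq> ?A" "ks f1 \<subseteq> ?A" "ks f2 \<subseteq> ?A"
    using keys_add[of f1 f2] by auto
  show "lk (conv op (f1 + f2) g) x = lk (conv op f1 g + conv op f2 g) x"
    unfolding lookup_add
    by (subst (1 2 3) lookup_conv_gen[OF A(1) _ finite_keys order_refl], (use A in auto)[3])
       (simp add: lookup_add ring_distribs sum.distrib[symmetric] if_distrib cong: if_cong)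
qed

lemma conv_add2: "conv op f (g1 + g2) = conv op f g1 + conv op f g2"
proof (rule poly_mapping_eqI)
  fix x
  let ?A = "ks g1 \<union> ks g2"
  have A: "finite ?A" "ks (g1+g2) \<subseteq> ?A" "ks g1 \<subseteq> ?A" "ks g2 \<subseteq> ?A"
    using keys_add[of g1 g2] by auto
  show "lk (conv op f (g1 + g2)) x = lk (conv op f g1 + conv op f g2) x"
    unfolding lookup_add
    by (subst (1 2 3) lookup_conv_gen[OF finite_keys order_refl A(1)], (use A in auto)[3])
       (simp add: lookup_add ring_distribs sum.distrib[symmetric] if_distrib cong: if_cong)
qed

lemma conv_smult1: "conv op (smult c f) g = smult c (conv op f g)"
proof (rule poly_mapping_eqI)
  fix x
  have "lk (conv op (smult c f) g) x = (\<Sum>u\<in>ks f. \<Sum>v\<in>ks g. if op u v = x then lk (smult c f) u * lk g v else 0)"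
    by (rule lookup_conv_gen) (auto simp: ks_smult)
  also have "\<dots> = c * lk (conv op f g) x"
    unfolding lookup_conv by (auto simp: sum_distrib_left mult.assoc intro!: sum.cong)
  finally show "lk (conv op (smult c f) g) x = lk (smult c (conv op f g)) x" by simp
qed

lemma conv_smult2: "conv op f (smult c g) = smult c (conv op f g)"
proof (rule poly_mapping_eqI)
  fix x
  have "lk (conv op f (smult c g)) x = (\<Sum>u\<in>ks f. \<Sum>v\<in>ks g. if op u v = x then lk f u * lk (smult c g) v else 0)"
    by (rule lookup_conv_gen) (auto simp: ks_smult)
  also have "\<dots> = c * lk (conv op f g) x"
    unfolding lookup_conv by (auto simp: sum_distrib_left mult.left_commute intro!: sum.cong)
  finally show "lk (conv op f (smult c g)) x = lk (smult c (conv op f g)) x" by simp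
qed

lemma conv_zero1[simp]: "conv op 0 g = 0" by (simp add: conv_def)
lemma conv_zero2[simp]: "conv op f 0 = 0" by (simp add: conv_def)

lemma conv_neg1: "conv op (- f) g = - conv op f g"
  using conv_add1[of op f "-f" g] by (simp add: eq_neg_iff_add_eq_0 add.commute)
lemma conv_neg2: "conv op f (- g) = - conv op f g"
  using conv_add2[of op f g "-g"] by (simp add: eq_neg_iff_add_eq_0 add.commute)
lemma conv_diff1: "conv op (f - g) h = conv op f h - conv op g h"
  using conv_add1[of op f "-g" h] conv_neg1[of op g h] by simp
lemma conv_diff2: "conv op h (f - g) = conv op h f - conv op h g"
  using conv_add2[of op h f "-g"] conv_neg2[of op h g] by simp

lemma conv_sum1: "conv op (\<Sum>i\<in>I. F i) g = (\<Sum>i\<in>I. conv op (F i) g)"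
  by (induction I rule: infinite_finite_induct) (auto simp: conv_add1)
lemma conv_sum2: "conv op g (\<Sum>i\<in>I. F i) = (\<Sum>i\<in>I. conv op g (F i))"
  by (induction I rule: infinite_finite_induct) (auto simp: conv_add2)

lemma conv_single: "conv op (Poly_Mapping.single u a) (Poly_Mapping.single v b) = Poly_Mapping.single (op u v) (a * b)"
  by (rule poly_mapping_eqI)
     (subst lookup_conv_gen[of "{u}" _ "{v}"], auto simp: lk_single)

lemma conv_assoc:
  assumes "\<And>u v w. op (op u v) w = op u (op v w)"
  shows "conv op (conv op f g) h = conv op f (conv op g h)"
proof -
  let ?F = "\<Sum>u\<in>ks f. Poly_Mapping.single u (lk f u)"
  let ?G = "\<Sum>u\<in>ks g. Poly_Mapping.single u (lk g u)"
  let ?H = "\<Sum>u\<in>ks h. Poly_Mapping.single u (lk h u)"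
  have "conv op (conv op f g) h = conv op (conv op ?F ?G) ?H"
    by (simp only: pm_decomp[symmetric])
  also have "\<dots> = (\<Sum>u\<in>ks f. \<Sum>v\<in>ks g. \<Sum>w\<in>ks h. Poly_Mapping.single (op (op u v) w) (lk f u * lk g v * lk h w))"
    apply (simp add: conv_sum1 conv_sum2 conv_single)
    apply (subst sum.swap[of _ "ks h" "ks g"])
    apply (subst sum.swap[of _ "ks h" "ks f"])
    apply (subst sum.swap[of _ "ks g" "ks f"]) by simp
  also have "\<dots> = conv op ?F (conv op ?G ?H)"
    apply (simp add: conv_sum1 conv_sum2 conv_single assms mult.assoc)
    apply (subst sum.swap[of _ "ks h" "ks g"])
    apply (subst sum.swap[of _ "ks h" "ks f"])
    apply (subst sum.swap[of _ "ks g" "ks f"]) by simp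
  also have "\<dots> = conv op f (conv op g h)"
    by (simp only: pm_decomp[symmetric])
  finally show ?thesis .
qed


section \<open>Free group reduction\<close>

definition cancel :: "letter \<Rightarrow> letter \<Rightarrow> bool" where
  "cancel a b \<longleftrightarrow> fst a = fst b \<and> snd a \<noteq> snd b"

fun rd :: "letter list \<Rightarrow> bool" where
  "rd [] = True"
| "rd [a] = True"
| "rd (a # b # w) = (\<not> cancel a b \<and> rd (b # w))"

lemma red_cons_Cons: "red_cons a (b # zs) = (if cancel a b then zs else a # b # zs)"
  by (simp add: cancel_def)

declare red_cons.simps(2)[simp del]

lemma red_Nil[simp]: "red [] = []" by (simp add: red_def)
lemma red_Cons: "red (a # xs) = red_cons a (red xs)" by (simp add: red_def)

lemma rd_tl: "rd (a # w) \<Longrightarrow> rd w"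
  by (cases w) auto

lemma rd_red_cons: "rd w \<Longrightarrow> rd (red_cons a w)"
proof (cases w)
  case Nil then show ?thesis by simp
next
  case (Cons b w')
  assume "rd w"
  then show ?thesis using Cons by (auto simp: red_cons_Cons dest: rd_tl)
qed

lemma rd_foldr: "rd z \<Longrightarrow> rd (foldr red_cons u z)"
  by (induction u) (auto intro: rd_red_cons)

lemma rd_red: "rd (red u)"
  unfolding red_def by (rule rd_foldr) simp

lemma cancel_sym: "cancel a b \<Longrightarrow> cancel b a"
  by (auto simp: cancel_def)

lemma cancel_trans: "cancel a b \<Longrightarrow> cancel b c \<Longrightarrow> \<not> cancel a c"
  by (cases a; cases b; cases c) (auto simp: cancel_def)

lemma red_cons_noncancel: "rd (a # w) \<Longrightarrow> red_cons a w = a # w"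
  by (cases w) (auto simp: red_cons_Cons)

lemma red_rd: "rd w \<Longrightarrow> red w = w"
proof (induction w)
  case Nil then show ?case by simp
next
  case (Cons a w)
  then show ?case by (simp add: red_Cons rd_tl red_cons_noncancel)
qed

lemma reduced_iff_rd: "reduced w \<longleftrightarrow> rd w"
  unfolding reduced_def using rd_red red_rd by metis

lemma reduced_red: "reduced (red u)"
  by (simp add: reduced_iff_rd rd_red)

lemma red_red: "red (red u) = red u"
  by (simp add: red_rd rd_red)

lemma red_cons_cancel2: "rd z \<Longrightarrow> cancel a b \<Longrightarrow> red_cons a (red_cons b z) = z"
proof (cases z)
  case Nil
  assume "cancel a b"
  then show ?thesis using Nil by (simp add: red_cons_Cons)
next
  case (Cons c z')
  assume rz: "rd z" and ab: "cancel a b"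
  show ?thesis
  proof (cases "cancel b c")
    case True
    then have "\<not> cancel a c" using ab cancel_trans cancel_sym by blast
    moreover have "a = c" using ab True by (cases a; cases b; cases c) (auto simp: cancel_def)
    ultimately show ?thesis using Cons True rz
      by (simp add: red_cons_Cons red_cons_noncancel)
  next
    case False
    then show ?thesis using Cons ab by (simp add: red_cons_Cons)
  qed
qed

lemma foldr_red_cons_step:
  assumes "rd r" "rd z"
  shows "foldr red_cons (red_cons a r) z = red_cons a (foldr red_cons r z)"
proof (cases r)
  case Nil then show ?thesis by simp
next
  case (Cons b r')
  show ?thesis
  proof (cases "cancel a b")
    case True
    have "rd (foldr red_cons r' z)" using assms Cons by (intro rd_foldr) auto
    then show ?thesis using Cons True by (simp add: red_cons_Cons red_cons_cancel2)
  next
    case False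
    then show ?thesis using Cons by (simp add: red_cons_Cons)
  qed
qed

lemma foldr_red: "rd z \<Longrightarrow> foldr red_cons (red u) z = foldr red_cons u z"
proof (induction u)
  case Nil then show ?case by simp
next
  case (Cons a u)
  have "foldr red_cons (red (a # u)) z = foldr red_cons (red_cons a (red u)) z"
    by (simp add: red_Cons)
  also have "\<dots> = red_cons a (foldr red_cons (red u) z)"
    by (rule foldr_red_cons_step[OF rd_red Cons.prems])
  also have "\<dots> = foldr red_cons (a # u) z" using Cons by simp
  finally show ?case .
qed

lemma red_append: "red (u @ v) = foldr red_cons u (red v)"
  by (simp add: red_def)

lemma red_red_left: "red (red u @ v) = red (u @ v)"
  by (simp add: red_append foldr_red rd_red)

lemma red_red_right: "red (u @ red v) = red (u @ v)"
  by (simp add: red_append red_red)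

lemma red_assoc: "red (red (u @ v) @ w) = red (u @ red (v @ w))"
  by (simp add: red_red_left red_red_right)


section \<open>Noncommutative series and the Magnus expansion\<close>

definition cp :: "(bool list \<Rightarrow> 'k::comm_ring_1) \<Rightarrow> (bool list \<Rightarrow> 'k) \<Rightarrow> bool list \<Rightarrow> 'k" where
  "cp F G w = (\<Sum>i\<le>length w. F (take i w) * G (drop i w))"

definition one1 :: "bool list \<Rightarrow> 'k::comm_ring_1" where
  "one1 w = (if w = [] then 1 else 0)"

lemma sum_tri: "(\<Sum>j\<le>n. \<Sum>l\<le>n-j. g j l) = (\<Sum>k\<le>(n::nat). \<Sum>j\<le>k. g j (k-j))"
proof -
  have "(\<Sum>j\<le>n. \<Sum>l\<le>n-j. g j l) = (\<Sum>(j,l)\<in>Sigma {..n} (\<lambda>j. {..n-j}). g j l)"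
    by (rule sum.Sigma) auto
  also have "Sigma {..n} (\<lambda>j. {..n-j}) = {(j,l). j+l \<le> n}" by auto
  also have "(\<Sum>(j,l)\<in>{(j,l). j+l \<le> n}. g j l) = (\<Sum>k\<le>n. \<Sum>j\<le>k. g j (k-j))"
    by (rule sum.triangle_reindex_eq)
  finally show ?thesis .
qed

lemma cp_assoc: "cp (cp F G) H = cp F (cp G H)"
proof
  fix w :: "bool list"
  let ?n = "length w"
  have "cp (cp F G) H w = (\<Sum>k\<le>?n. \<Sum>j\<le>k. F (take j w) * G (take (k-j) (drop j w)) * H (drop k w))"
    unfolding cp_def
    by (auto simp: sum_distrib_right min_def take_take drop_take intro!: sum.cong)
  also have "\<dots> = (\<Sum>j\<le>?n. \<Sum>l\<le>?n-j. F (take j w) * G (take l (drop j w)) * H (drop (j+l) w))"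
    by (subst sum_tri) (auto intro!: sum.cong)
  also have "\<dots> = cp F (cp G H) w"
    unfolding cp_def
    by (auto simp: sum_distrib_left mult.assoc add.commute intro!: sum.cong)
  finally show "cp (cp F G) H w = cp F (cp G H) w" .
qed

lemma cp_one1_left: "cp one1 F = F"
proof
  fix w :: "bool list"
  show "cp one1 F w = F w"
  proof (cases w)
    case Nil then show ?thesis by (simp add: cp_def one1_def)
  next
    case (Cons b w')
    have "cp one1 F w = (\<Sum>i\<le>length w. if i = 0 then F (drop i w) else 0)"
      unfolding cp_def one1_def using Cons by (intro sum.cong) auto
    then show ?thesis by simp
  qed
qed

lemma cp_one1_right: "cp F one1 = F"
proof
  fix w :: "bool list"
  have "cp F one1 w = (\<Sum>i\<le>length w. if i = length w then F (take i w) else 0)"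
    unfolding cp_def one1_def by (intro sum.cong) auto
  then show "cp F one1 w = F w" by simp
qed

lemma cp_sum_left: "cp (\<lambda>w. \<Sum>u\<in>A. F u w) G = (\<lambda>w. \<Sum>u\<in>A. cp (F u) G w)"
  unfolding cp_def by (auto simp: sum_distrib_right intro: sum.swap)

lemma cp_sum_right: "cp G (\<lambda>w. \<Sum>u\<in>A. F u w) = (\<lambda>w. \<Sum>u\<in>A. cp G (F u) w)"
  unfolding cp_def by (auto simp: sum_distrib_left intro: sum.swap)

lemma cp_scale_left: "cp (\<lambda>w. c * F w) G = (\<lambda>w. c * cp F G w)"
  unfolding cp_def by (auto simp: sum_distrib_left mult.assoc)

lemma cp_scale_right: "cp G (\<lambda>w. c * F w) = (\<lambda>w. c * cp G F w)"
  unfolding cp_def by (auto simp: sum_distrib_left mult.left_commute)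

definition Ls :: "letter \<Rightarrow> bool list \<Rightarrow> 'k::comm_ring_1" where
  "Ls a w = (if snd a then (if w = replicate (length w) (fst a) then (-1) ^ length w else 0)
             else (if w = [] \<or> w = [fst a] then 1 else 0))"

lemma magc_Cons: "magc (a # g) = cp (Ls a) (magc g)"
proof
  fix w :: "bool list"
  show "magc (a # g) w = cp (Ls a) (magc g) w"
  proof (cases "snd a")
    case True
    have "magc (a # g) w = (\<Sum>k\<in>{0..length w}. if take k w = replicate k (fst a) then (-1) ^ k * magc g (drop k w) else 0)"
      using True by simp
    also have "\<dots> = cp (Ls a) (magc g) w"
      unfolding cp_def Ls_def using True atLeast0AtMost
      by (auto intro!: sum.cong simp: min_def)
    finally show ?thesis .
  next
    case False
    show ?thesis
    proof (cases w)
      case Nil then show ?thesis using False by (simp add: cp_def Ls_def)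
    next
      case (Cons b w')
      have "cp (Ls a) (magc g) w = (\<Sum>i\<le>Suc (length w'). Ls a (take i (b # w')) * magc g (drop i (b # w')))"
        by (simp add: cp_def Cons)
      also have "\<dots> = (\<Sum>i\<le>Suc (length w'). (if i = 0 then magc g w else 0) + (if i = 1 then (if b = fst a then magc g w' else 0) else 0))"
      proof (intro sum.cong refl)
        fix i assume i: "i \<in> {..Suc (length w')}"
        show "Ls a (take i (b # w')) * magc g (drop i (b # w')) = (if i = 0 then magc g w else 0) + (if i = 1 then (if b = fst a then magc g w' else 0) else 0)"
        proof (cases i)
          case 0 then show ?thesis using False Cons by (simp add: Ls_def)
        next
          case (Suc j)
          show ?thesis
          proof (cases j)
            case 0 then show ?thesis using False Cons Suc by (simp add: Ls_def)
          next
            case (Suc j')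
            then obtain c w'' where "w' = c # w''" using i \<open>i = Suc j\<close> by (cases w') auto
            then show ?thesis using False Suc \<open>i = Suc j\<close> by (simp add: Ls_def)
          qed
        qed
      qed
      also have "\<dots> = magc g w + (if b = fst a then magc g w' else 0)"
        by (simp add: sum.distrib Suc_le_eq)
      finally have eq: "cp (Ls a) (magc g) w = magc g w + (if b = fst a then magc g w' else 0)" .
      have m: "magc (a # g) w = magc g w + (if b = fst a then magc g w' else 0)" using False Cons by simp
      show ?thesis by (simp only: m eq)
    qed
  qed
qed

lemma magc_Nil: "magc [] = one1"
  by (auto simp: one1_def)

lemma magc_append: "magc (u @ v) = cp (magc u) (magc v)"
  by (induction u) (simp_all add: magc_Nil cp_one1_left magc_Cons cp_assoc)


lemma cp_rep:
  assumes F: "\<And>w. F w \<noteq> 0 \<Longrightarrow> w = replicate (length w) i"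
      and G: "\<And>w. G w \<noteq> 0 \<Longrightarrow> w = replicate (length w) i"
  shows "cp F G w = (if w = replicate (length w) i
           then (\<Sum>k\<le>length w. F (replicate k i) * G (replicate (length w - k) i)) else 0)"
proof (cases "w = replicate (length w) i")
  case True
  then obtain n where wn: "w = replicate n i" by blast
  show ?thesis unfolding cp_def wn by (auto simp: min_def intro!: sum.cong)
next
  case False
  have "F (take k w) * G (drop k w) = 0" for k
  proof (rule ccontr)
    assume "F (take k w) * G (drop k w) \<noteq> 0"
    then have "F (take k w) \<noteq> 0" "G (drop k w) \<noteq> 0" by auto
    then have "take k w = replicate (length (take k w)) i" "drop k w = replicate (length (drop k w)) i"
      using F G by blast+
    then have "w = replicate (length (take k w)) i @ replicate (length (drop k w)) i"
      by (metis append_take_drop_id)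
    then have "w = replicate (length (take k w) + length (drop k w)) i" by (simp only: replicate_add)
    moreover have "length (take k w) + length (drop k w) = length w" by (simp only: length_append[symmetric] append_take_drop_id)
    ultimately have "w = replicate (length w) i" by simp
    with False show False by simp
  qed
  then show ?thesis using False by (simp add: cp_def)
qed

lemma Ls_supp: "Ls a w \<noteq> 0 \<Longrightarrow> w = replicate (length w) (fst a)"
  by (auto simp: Ls_def split: if_splits)

lemma Ls_rep: "Ls a (replicate k (fst a)) = (if snd a then (-1) ^ k else if k \<le> 1 then 1 else 0)"
proof -
  have "replicate k (fst a) = [fst a] \<longleftrightarrow> k = 1"
    by (cases k) auto
  then show ?thesis by (auto simp: Ls_def)
qed

lemma Ls_rep2: "Ls (i, s) (replicate k i) = (if s then (-1) ^ k else if k \<le> 1 then 1 else 0)"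
  using Ls_rep[of "(i,s)" k] by simp

lemma alt_sum1: "(\<Sum>k\<le>m. (-1)^k * (if m - k \<le> 1 then 1 else 0) :: 'k::comm_ring_1) = (if m = 0 then 1 else 0)"
proof (cases m)
  case 0 then show ?thesis by simp
next
  case (Suc m')
  have "(\<Sum>k\<le>m. (-1)^k * (if m - k \<le> 1 then 1 else 0) :: 'k) = (\<Sum>k\<le>Suc m'. if k \<ge> m' then (-1)^k else 0)"
    using Suc by (intro sum.cong) auto
  also have "\<dots> = (\<Sum>k\<le>m'. if k \<ge> m' then (-1)^k else 0) + (-1) ^ Suc m'"
    by simp
  also have "(\<Sum>k\<le>m'. if k \<ge> m' then (-1)^k else (0::'k)) = (\<Sum>k\<le>m'. if k = m' then (-1)^k else 0)"
    by (intro sum.cong) auto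
  finally show ?thesis using Suc by simp
qed

lemma alt_sum2: "(\<Sum>k\<le>m. (if k \<le> 1 then 1 else 0) * (-1)^(m-k) :: 'k::comm_ring_1) = (if m = 0 then 1 else 0)"
proof -
  have "(\<Sum>k\<le>m. (if k \<le> 1 then 1 else 0) * (-1)^(m-k) :: 'k) = (\<Sum>k\<le>m. (-1)^k * (if m - k \<le> 1 then 1 else 0))"
    by (subst sum.atLeastAtMost_rev[of _ 0 m, simplified atLeast0AtMost]) (auto intro!: sum.cong)
  also have "\<dots> = (if m = 0 then 1 else 0)" by (rule alt_sum1)
  finally show ?thesis .
qed

lemma cancel_cp: "cancel a b \<Longrightarrow> cp (Ls a) (Ls b) = one1"
proof
  fix w :: "bool list"
  assume ab: "cancel a b"
  obtain i s where a: "a = (i, s)" by (cases a)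
  then have b: "b = (i, \<not> s)" using ab by (cases b) (auto simp: cancel_def)
  have supp: "\<And>w. Ls b w \<noteq> 0 \<Longrightarrow> w = replicate (length w) i" using Ls_supp b by fastforce
  have e: "cp (Ls a) (Ls b) w = (if w = replicate (length w) i
           then (\<Sum>k\<le>length w. Ls a (replicate k i) * Ls b (replicate (length w - k) i)) else 0)"
    by (rule cp_rep[OF _ supp]) (use Ls_supp a in fastforce)
  show "cp (Ls a) (Ls b) w = one1 w"
  proof (cases "w = replicate (length w) i")
    case False
    then have "w \<noteq> []" by auto
    then show ?thesis using e False by (simp add: one1_def)
  next
    case True
    have c1: "cp (Ls a) (Ls b) w = (\<Sum>k\<le>length w. Ls a (replicate k i) * Ls b (replicate (length w - k) i))"
      using e if_P[OF True] by metis
    have s1: "(\<Sum>k\<le>length w. Ls a (replicate k i) * Ls b (replicate (length w - k) i)) = (if length w = 0 then 1 else 0)"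
    proof (cases s)
      case True
      then have "(\<Sum>k\<le>length w. Ls a (replicate k i) * Ls b (replicate (length w - k) i)) =
         (\<Sum>k\<le>length w. (-1)^k * (if length w - k \<le> 1 then 1 else 0))"
        unfolding a b Ls_rep2 by simp
      also have "\<dots> = (if length w = 0 then 1 else 0)" by (rule alt_sum1)
      finally show ?thesis .
    next
      case False
      then have "(\<Sum>k\<le>length w. Ls a (replicate k i) * Ls b (replicate (length w - k) i)) =
         (\<Sum>k\<le>length w. (if k \<le> 1 then 1 else 0) * (-1)^(length w - k))"
        unfolding a b Ls_rep2 by simp
      also have "\<dots> = (if length w = 0 then 1 else 0)" by (rule alt_sum2)
      finally show ?thesis .
    qed
    show ?thesis unfolding one1_def c1 s1 by (simp only: length_0_conv)
  qed
qed

lemma magc_red_cons: "magc (red_cons a g) = magc (a # g)"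
proof (cases g)
  case Nil then show ?thesis by simp
next
  case (Cons b g')
  show ?thesis
  proof (cases "cancel a b")
    case True
    have "magc (a # g) = cp (cp (Ls a) (Ls b)) (magc g')"
      by (simp add: Cons magc_Cons cp_assoc)
    also have "\<dots> = magc g'" by (simp add: cancel_cp[OF True] cp_one1_left)
    finally have eq: "magc (a # g) = magc g'" .
    have r: "red_cons a g = g'" using Cons True by (simp add: red_cons_Cons)
    show ?thesis by (simp only: r eq)
  next
    case False then show ?thesis using Cons by (simp add: red_cons_Cons)
  qed
qed

lemma magc_red: "magc (red u) = magc u"
  by (induction u) (simp_all add: red_Cons magc_red_cons magc_Cons)

lemma magc_mul: "magc (red (u @ v)) = cp (magc u) (magc v)"
  by (simp add: magc_red magc_append)


definition Mg :: "(letter list \<Rightarrow>\<^sub>0 'k::comm_ring_1) \<Rightarrow> bool list \<Rightarrow> 'k" where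
  "Mg f w = (\<Sum>u\<in>ks f. lk f u * magc u w)"

lemma Mg_gen: "finite A \<Longrightarrow> ks f \<subseteq> A \<Longrightarrow> Mg f w = (\<Sum>u\<in>A. lk f u * magc u w)"
  unfolding Mg_def by (rule sum.mono_neutral_left) (auto simp: in_keys_iff)

lemma Mg_add: "Mg (f + g) w = Mg f w + Mg g w"
proof -
  let ?A = "ks f \<union> ks g"
  have A: "finite ?A" "ks (f+g) \<subseteq> ?A" "ks f \<subseteq> ?A" "ks g \<subseteq> ?A" using keys_add[of f g] by auto
  show ?thesis
    by (simp add: Mg_gen[OF A(1,2)] Mg_gen[OF A(1,3)] Mg_gen[OF A(1,4)] lookup_add ring_distribs sum.distrib)
qed

lemma Mg_smult: "Mg (smult c f) w = c * Mg f w"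
proof -
  have "Mg (smult c f) w = (\<Sum>u\<in>ks f. lk (smult c f) u * magc u w)" by (rule Mg_gen[OF finite_keys ks_smult])
  then show ?thesis by (simp add: Mg_def sum_distrib_left mult.assoc)
qed

lemma Mg_zero[simp]: "Mg 0 w = 0" by (simp add: Mg_def)

lemma Mg_neg: "Mg (- f) w = - Mg f w"
  using Mg_add[of f "-f" w] by (simp add: eq_neg_iff_add_eq_0 add.commute)

lemma Mg_diff: "Mg (f - g) w = Mg f w - Mg g w"
  using Mg_add[of f "-g" w] Mg_neg[of g w] by simp

lemma Mg_sum: "Mg (\<Sum>i\<in>I. F i) w = (\<Sum>i\<in>I. Mg (F i) w)"
  by (induction I rule: infinite_finite_induct) (auto simp: Mg_add)

lemma Mg_single: "Mg (Poly_Mapping.single u c) w = c * magc u w"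
  by (simp add: Mg_def lk_single)

lemma Mg_fun: "Mg f = (\<lambda>w. \<Sum>u\<in>ks f. lk f u * magc u w)"
  by (simp add: Mg_def fun_eq_iff)

lemma Mg_mulB: "Mg (mulB f g) = cp (Mg f) (Mg g)"
proof
  fix w
  have "Mg (mulB f g) w = (\<Sum>u\<in>ks f. \<Sum>v\<in>ks g. lk f u * lk g v * magc (red (u @ v)) w)"
    unfolding mulB_def conv_def by (simp add: Mg_sum Mg_single)
  also have "\<dots> = (\<Sum>u\<in>ks f. \<Sum>v\<in>ks g. lk f u * lk g v * cp (magc u) (magc v) w)"
    by (simp add: magc_mul)
  also have "\<dots> = cp (Mg f) (Mg g) w"
    unfolding Mg_fun cp_sum_left cp_scale_left cp_sum_right cp_scale_right
    by (simp add: sum_distrib_left mult.assoc)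
  finally show "Mg (mulB f g) w = cp (Mg f) (Mg g) w" .
qed

lemma magc_nil_word: "magc u [] = 1"
proof (induction u)
  case Nil then show ?case by simp
next
  case (Cons a u)
  then show ?case by (simp add: magc_Cons cp_def Ls_def)
qed

lemma augm_Mg: "augm f = Mg f []"
  by (simp add: augm_def Mg_def magc_nil_word)

lemma cp_nil: "cp F G [] = F [] * G []"
  by (simp add: cp_def)

definition M2 :: "(letter list \<times> letter list \<Rightarrow>\<^sub>0 'k::comm_ring_1) \<Rightarrow> bool list \<times> bool list \<Rightarrow> 'k" where
  "M2 F pq = (\<Sum>x\<in>ks F. lk F x * magc (fst x) (fst pq) * magc (snd x) (snd pq))"

lemma M2_gen: "finite A \<Longrightarrow> ks F \<subseteq> A \<Longrightarrow> M2 F pq = (\<Sum>x\<in>A. lk F x * magc (fst x) (fst pq) * magc (snd x) (snd pq))"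
  unfolding M2_def by (rule sum.mono_neutral_left) (auto simp: in_keys_iff)

lemma M2_add: "M2 (f + g) w = M2 f w + M2 g w"
proof -
  let ?A = "ks f \<union> ks g"
  have A: "finite ?A" "ks (f+g) \<subseteq> ?A" "ks f \<subseteq> ?A" "ks g \<subseteq> ?A" using keys_add[of f g] by auto
  show ?thesis
    by (simp add: M2_gen[OF A(1,2)] M2_gen[OF A(1,3)] M2_gen[OF A(1,4)] lookup_add ring_distribs sum.distrib)
qed

lemma M2_smult: "M2 (smult c f) w = c * M2 f w"
proof -
  have "M2 (smult c f) w = (\<Sum>x\<in>ks f. lk (smult c f) x * magc (fst x) (fst w) * magc (snd x) (snd w))"
    by (rule M2_gen[OF finite_keys ks_smult])
  then show ?thesis by (simp add: M2_def sum_distrib_left mult.assoc)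
qed

lemma M2_zero[simp]: "M2 0 w = 0" by (simp add: M2_def)

lemma M2_neg: "M2 (- f) w = - M2 f w"
  using M2_add[of f "-f" w] by (simp add: eq_neg_iff_add_eq_0 add.commute)

lemma M2_diff: "M2 (f - g) w = M2 f w - M2 g w"
  using M2_add[of f "-g" w] M2_neg[of g w] by simp

lemma M2_sum: "M2 (\<Sum>i\<in>I. F i) w = (\<Sum>i\<in>I. M2 (F i) w)"
  by (induction I rule: infinite_finite_induct) (auto simp: M2_add)

lemma M2_single: "M2 (Poly_Mapping.single x c) pq = c * magc (fst x) (fst pq) * magc (snd x) (snd pq)"
  by (simp add: M2_def lk_single)

lemma M2_tens: "M2 (tens a b) (p, q) = Mg a p * Mg b q"
  unfolding tens_def by (simp add: M2_sum M2_single Mg_def sum_product mult_ac)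

definition cp2 :: "(bool list \<times> bool list \<Rightarrow> 'k::comm_ring_1) \<Rightarrow> (bool list \<times> bool list \<Rightarrow> 'k) \<Rightarrow> bool list \<times> bool list \<Rightarrow> 'k" where
  "cp2 F G pq = (\<Sum>i\<le>length (fst pq). \<Sum>j\<le>length (snd pq).
      F (take i (fst pq), take j (snd pq)) * G (drop i (fst pq), drop j (snd pq)))"

lemma M2_mulBB: "M2 (mulBB F G) pq = cp2 (M2 F) (M2 G) pq"
proof -
  obtain p q where pq: "pq = (p, q)" by (cases pq)
  have "M2 (mulBB F G) (p,q) = (\<Sum>x\<in>ks F. \<Sum>y\<in>ks G. lk F x * lk G y *
      (cp (magc (fst x)) (magc (fst y)) p * cp (magc (snd x)) (magc (snd y)) q))"
    unfolding mulBB_def conv_def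
    by (simp add: M2_sum M2_single magc_mul case_prod_beta mult_ac)
  also have "\<dots> = cp2 (M2 F) (M2 G) (p,q)"
    unfolding cp2_def M2_def cp_def
    apply (simp add: sum_distrib_left sum_distrib_right sum_product)
    apply (subst sum.swap[of _ "ks G" "ks F"])
    apply (subst sum.swap[of _ "{..length q}" "ks F"])
    apply (subst sum.swap[of _ "{..length p}" "ks F"])
    apply (subst sum.swap[of _ "{..length q}" "ks G"])
    apply (subst sum.swap[of _ "{..length p}" "ks G"])
    apply (subst sum.swap[of _ "{..length q}" "{..length p}"])
    by (simp add: mult_ac)
  finally show ?thesis by (simp add: pq)
qed


lemma smult_add: "smult c (x + y) = smult c x + smult c y"
  by (rule poly_mapping_eqI) (simp add: lookup_add ring_distribs)
lemma smult_add_left: "smult (c + d) x = smult c x + smult d x"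
  by (rule poly_mapping_eqI) (simp add: lookup_add ring_distribs)
lemma smult_zero[simp]: "smult c 0 = 0"
  by (rule poly_mapping_eqI) simp
lemma smult_zero_left[simp]: "smult 0 x = 0"
  by (rule poly_mapping_eqI) simp
lemma smult_one[simp]: "smult 1 x = x"
  by (rule poly_mapping_eqI) simp
lemma smult_neg: "smult c (- x) = - smult c x"
  by (rule poly_mapping_eqI) simp
lemma smult_neg_left: "smult (- c) x = - smult c x"
  by (rule poly_mapping_eqI) simp
lemma smult_diff: "smult c (x - y) = smult c x - smult c y"
  by (rule poly_mapping_eqI) (simp add: lookup_minus right_diff_distrib)
lemma smult_smult: "smult c (smult d x) = smult (c * d) x"
  by (rule poly_mapping_eqI) (simp add: mult.assoc)
lemma smult_sum: "smult c (\<Sum>i\<in>I. F i) = (\<Sum>i\<in>I. smult c (F i))"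
  by (induction I rule: infinite_finite_induct) (auto simp: smult_add)
lemma smult_single: "smult c (Poly_Mapping.single u d) = Poly_Mapping.single u (c * d)"
  by (rule poly_mapping_eqI) (simp add: lk_single)

lemma VB_iff: "f \<in> VB \<longleftrightarrow> (\<forall>u\<in>ks f. reduced u)"
  by (simp add: VB_def)

lemma VB_zero[simp]: "0 \<in> VB" by (simp add: VB_def)
lemma VB_add: "f \<in> VB \<Longrightarrow> g \<in> VB \<Longrightarrow> f + g \<in> VB"
  using keys_add[of f g] by (auto simp: VB_def)
lemma VB_smult: "f \<in> VB \<Longrightarrow> smult c f \<in> VB"
  using ks_smult[of c f] by (auto simp: VB_def)
lemma VB_neg: "f \<in> VB \<Longrightarrow> - f \<in> VB"
  by (simp add: VB_def)
lemma VB_diff: "f \<in> VB \<Longrightarrow> g \<in> VB \<Longrightarrow> f - g \<in> VB"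
  using VB_add[of f "-g"] VB_neg[of g] by simp
lemma VB_sum: "(\<And>i. i \<in> I \<Longrightarrow> F i \<in> VB) \<Longrightarrow> (\<Sum>i\<in>I. F i) \<in> VB"
  by (induction I rule: infinite_finite_induct) (auto intro: VB_add)
lemma VB_single: "reduced u \<Longrightarrow> Poly_Mapping.single u c \<in> VB"
  by (simp add: VB_def)
lemma mulB_VB: "mulB f g \<in> VB"
  unfolding VB_def mulB_def using ks_conv[of "\<lambda>u v. red (u @ v)" f g] reduced_red by fastforce

lemma reduced_Nil: "reduced []" by (simp add: reduced_iff_rd)
lemma reduced_single: "reduced [a]" by (simp add: reduced_iff_rd)
lemma reduced_replicate: "reduced (replicate n a)"
proof -
  have "rd (replicate n a)" by (induction n rule: nat_induct) (auto, case_tac n, auto simp: cancel_def)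
  then show ?thesis by (simp add: reduced_iff_rd)
qed

lemma oneB_VB: "oneB \<in> VB" by (simp add: oneB_def VB_single reduced_Nil)
lemma X1_VB: "X1 \<in> VB" by (simp add: X1_def VB_single reduced_single)
lemma X1inv_VB: "X1inv \<in> VB" by (simp add: X1inv_def VB_single reduced_single)
lemma X0pow_VB: "X0pow n \<in> VB" by (simp add: X0pow_def VB_single reduced_replicate)

lemma mulB_add1: "mulB (f + g) h = mulB f h + mulB g h" by (simp add: mulB_def conv_add1)
lemma mulB_add2: "mulB h (f + g) = mulB h f + mulB h g" by (simp add: mulB_def conv_add2)
lemma mulB_diff1: "mulB (f - g) h = mulB f h - mulB g h" by (simp add: mulB_def conv_diff1)
lemma mulB_diff2: "mulB h (f - g) = mulB h f - mulB h g" by (simp add: mulB_def conv_diff2)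
lemma mulB_smult1: "mulB (smult c f) h = smult c (mulB f h)" by (simp add: mulB_def conv_smult1)
lemma mulB_smult2: "mulB h (smult c f) = smult c (mulB h f)" by (simp add: mulB_def conv_smult2)
lemma mulB_sum1: "mulB (\<Sum>i\<in>I. F i) h = (\<Sum>i\<in>I. mulB (F i) h)" by (simp add: mulB_def conv_sum1)
lemma mulB_sum2: "mulB h (\<Sum>i\<in>I. F i) = (\<Sum>i\<in>I. mulB h (F i))" by (simp add: mulB_def conv_sum2)
lemma mulB_zero1[simp]: "mulB 0 h = 0" by (simp add: mulB_def)
lemma mulB_zero2[simp]: "mulB h 0 = 0" by (simp add: mulB_def)
lemma mulB_assoc: "mulB (mulB f g) h = mulB f (mulB g h)"
  unfolding mulB_def by (rule conv_assoc) (rule red_assoc)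
lemma mulB_single: "mulB (Poly_Mapping.single u a) (Poly_Mapping.single v b) = Poly_Mapping.single (red (u @ v)) (a * b)"
  by (simp add: mulB_def conv_single)

lemma mulB_one_left: "f \<in> VB \<Longrightarrow> mulB oneB f = f"
proof (rule poly_mapping_eqI)
  fix x assume f: "f \<in> VB"
  have "lk (mulB oneB f) x = (\<Sum>u\<in>{[]}. \<Sum>v\<in>ks f. if red (u @ v) = x then lk oneB u * lk f v else 0)"
    unfolding mulB_def by (rule lookup_conv_gen) (auto simp: oneB_def)
  also have "\<dots> = (\<Sum>v\<in>ks f. if v = x then lk f v else 0)"
    using f by (auto simp: oneB_def VB_def reduced_def intro!: sum.cong)
  also have "\<dots> = lk f x" by (simp add: in_keys_iff)
  finally show "lk (mulB oneB f) x = lk f x" .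
qed

lemma mulB_one_right: "f \<in> VB \<Longrightarrow> mulB f oneB = f"
proof (rule poly_mapping_eqI)
  fix x assume f: "f \<in> VB"
  have "lk (mulB f oneB) x = (\<Sum>u\<in>ks f. \<Sum>v\<in>{[]}. if red (u @ v) = x then lk f u * lk oneB v else 0)"
    unfolding mulB_def by (rule lookup_conv_gen) (auto simp: oneB_def)
  also have "\<dots> = (\<Sum>v\<in>ks f. if v = x then lk f v else 0)"
    using f by (auto simp: oneB_def VB_def reduced_def intro!: sum.cong)
  also have "\<dots> = lk f x" by (simp add: in_keys_iff)
  finally show "lk (mulB f oneB) x = lk f x" .
qed

lemma Mg_oneB: "Mg oneB = one1"
  by (simp add: fun_eq_iff oneB_def Mg_single one1_def)

lemma Mg_smult_oneB: "Mg (smult c oneB) w = (if w = [] then c else 0)"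
  by (simp add: Mg_smult Mg_oneB one1_def)

section \<open>Augmentation filtration\<close>

lemma augI_iff: "a \<in> augI \<longleftrightarrow> a \<in> VB \<and> Mg a [] = 0"
  by (simp add: augI_def augm_Mg)

lemma filV_Suc: "filV (Suc n) = addspan {mulB a b | a b. a \<in> augI \<and> b \<in> filV n}"
  by (simp add: prodspan_def)

declare filV.simps(2)[simp del]

lemma addspan_mono: assumes "S \<subseteq> T" shows "addspan S \<subseteq> addspan T"
proof
  fix x assume "x \<in> addspan S"
  then show "x \<in> addspan T" by (induction x rule: addspan.induct) (use assms in \<open>auto intro: addspan.intros\<close>)
qed

lemma filV_VB: "x \<in> filV n \<Longrightarrow> x \<in> VB"
proof (induction n arbitrary: x)
  case 0 then show ?case by simp
next
  case (Suc n)
  from Suc.prems show ?case unfolding filV_Suc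
    by (induction x rule: addspan.induct) (auto intro: VB_add mulB_VB)
qed

lemma prodset_mono: "A \<subseteq> B \<Longrightarrow> {mulB a b |a b. a \<in> augI \<and> b \<in> A} \<subseteq> {mulB a b |a b. a \<in> augI \<and> b \<in> B}"
  by blast

lemma filV_Suc_sub: "filV (Suc n) \<subseteq> (filV n :: (letter list \<Rightarrow>\<^sub>0 'k::comm_ring_1) set)"
proof (induction n)
  case 0
  show ?case unfolding filV_Suc
  proof
    fix x assume "x \<in> addspan {mulB a b |a b. a \<in> augI \<and> b \<in> filV 0}"
    then show "x \<in> filV 0" by (induction x rule: addspan.induct) (auto intro: VB_add mulB_VB)
  qed
next
  case (Suc n)
  have "(filV (Suc (Suc n)) :: (letter list \<Rightarrow>\<^sub>0 'k) set) = addspan {mulB a b |a b. a \<in> augI \<and> b \<in> filV (Suc n)}" by (rule filV_Suc)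
  also have "\<dots> \<subseteq> addspan {mulB a b |a b. a \<in> augI \<and> b \<in> filV n}" using addspan_mono[OF prodset_mono[OF Suc.IH]] by simp
  also have "\<dots> = filV (Suc n)" by (rule filV_Suc[symmetric])
  finally show ?case .
qed

lemma filV_antimono: "m \<le> n \<Longrightarrow> filV n \<subseteq> filV m"
  by (induction n rule: dec_induct) (use filV_Suc_sub in auto)

lemma filV_zero: "0 \<in> filV n"
  by (cases n) (auto simp: filV_Suc intro: addspan.zero)

lemma filV_add: "x \<in> filV n \<Longrightarrow> y \<in> filV n \<Longrightarrow> x + y \<in> filV n"
  by (cases n) (auto simp: filV_Suc intro: addspan.add VB_add)

lemma filV_mul: "a \<in> augI \<Longrightarrow> b \<in> filV n \<Longrightarrow> mulB a b \<in> filV (Suc n)"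
  unfolding filV_Suc by (rule addspan.gen) blast

lemma augI_smult: "a \<in> augI \<Longrightarrow> smult c a \<in> augI"
  by (simp add: augI_iff VB_smult Mg_smult)

lemma filV_smult: "x \<in> filV n \<Longrightarrow> smult c x \<in> filV n"
proof (cases n)
  case 0
  assume "x \<in> filV n" then show ?thesis using 0 by (simp add: VB_smult)
next
  case (Suc m)
  assume "x \<in> filV n"
  then have "x \<in> addspan {mulB a b |a b. a \<in> augI \<and> b \<in> filV m}" using Suc by (simp add: filV_Suc)
  then have "smult c x \<in> addspan {mulB a b |a b. a \<in> augI \<and> b \<in> filV m}"
  proof (induction x rule: addspan.induct)
    case zero then show ?case by (simp add: addspan.zero)
  next
    case (gen x)
    then obtain a b where "x = mulB a b" "a \<in> augI" "b \<in> filV m" by blast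
    then have "smult c x = mulB (smult c a) b" "smult c a \<in> augI" by (simp_all add: mulB_smult1 augI_smult)
    then show ?case using \<open>b \<in> filV m\<close> by (intro addspan.gen) blast
  next
    case (add x y) then show ?case by (simp add: smult_add addspan.add)
  qed
  then show ?thesis using Suc by (simp add: filV_Suc)
qed

lemma filV_neg: "x \<in> filV n \<Longrightarrow> - x \<in> filV n"
  using filV_smult[of x n "-1"] by (simp add: smult_neg_left)

lemma filV_diff: "x \<in> filV n \<Longrightarrow> y \<in> filV n \<Longrightarrow> x - y \<in> filV n"
  using filV_add[of x n "-y"] filV_neg[of y n] by simp

lemma filV_sum: "(\<And>i. i \<in> I \<Longrightarrow> F i \<in> filV n) \<Longrightarrow> (\<Sum>i\<in>I. F i) \<in> filV n"
  by (induction I rule: infinite_finite_induct) (auto intro: filV_add filV_zero)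

lemma filV_left: "x \<in> VB \<Longrightarrow> r \<in> filV m \<Longrightarrow> mulB x r \<in> filV m"
proof -
  assume x: "x \<in> VB" and r: "r \<in> filV m"
  define c where "c = Mg x []"
  have a: "x - smult c oneB \<in> augI"
    using x by (simp add: augI_iff VB_diff VB_smult oneB_VB Mg_diff Mg_smult_oneB c_def)
  have "mulB x r = smult c r + mulB (x - smult c oneB) r"
    by (simp add: mulB_diff1 mulB_smult1 mulB_one_left[OF filV_VB[OF r]])
  also have "\<dots> \<in> filV m"
    using filV_add[OF filV_smult[OF r] set_mp[OF filV_Suc_sub filV_mul[OF a r]]] .
  finally show ?thesis .
qed

lemma filV_vanish: "x \<in> filV n \<Longrightarrow> length w < n \<Longrightarrow> Mg x w = 0"
proof (induction n arbitrary: x w)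
  case 0 then show ?case by simp
next
  case (Suc n)
  from Suc.prems(1) have "x \<in> addspan {mulB a b |a b. a \<in> augI \<and> b \<in> filV n}" by (simp add: filV_Suc)
  then show ?case using Suc.prems(2)
  proof (induction x rule: addspan.induct)
    case zero then show ?case by simp
  next
    case (gen x)
    then obtain a b where ab: "x = mulB a b" "a \<in> augI" "b \<in> filV n" by blast
    have "Mg x w = (\<Sum>i\<le>length w. Mg a (take i w) * Mg b (drop i w))"
      by (simp add: ab Mg_mulB cp_def)
    also have "\<dots> = 0"
    proof (intro sum.neutral ballI)
      fix i assume iw: "i \<in> {..length w}"
      show "Mg a (take i w) * Mg b (drop i w) = 0"
      proof (cases i)
        case 0 then show ?thesis using ab(2) by (simp add: augI_iff)
      next
        case (Suc j)
        then have "length (drop i w) < n" using gen.prems iw by auto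
        then show ?thesis using Suc.IH[OF ab(3)] by simp
      qed
    qed
    finally show ?case .
  next
    case (add x y) then show ?case by (simp add: Mg_add)
  qed
qed

lemma WB_iff: "x \<in> WB \<longleftrightarrow> (\<exists>c y. y \<in> VB \<and> x = smult c oneB + mulB y (X1 - oneB))"
  by (auto simp: WB_def)

lemma WB_VB: "x \<in> WB \<Longrightarrow> x \<in> VB"
  by (auto simp: WB_iff intro!: VB_add VB_smult oneB_VB mulB_VB)

lemma WB_intro: "y \<in> VB \<Longrightarrow> smult c oneB + mulB y (X1 - oneB) \<in> WB"
  by (auto simp: WB_iff)

lemma WB_zero: "0 \<in> WB"
  using WB_intro[of 0 0] by simp

lemma WB_oneB: "oneB \<in> WB"
  using WB_intro[of 0 1] by simp

lemma WB_add: "x \<in> WB \<Longrightarrow> y \<in> WB \<Longrightarrow> x + y \<in> WB"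
proof -
  assume "x \<in> WB" "y \<in> WB"
  then obtain c z d z' where "z \<in> VB" "x = smult c oneB + mulB z (X1 - oneB)"
    "z' \<in> VB" "y = smult d oneB + mulB z' (X1 - oneB)" by (auto simp: WB_iff)
  then have "x + y = smult (c + d) oneB + mulB (z + z') (X1 - oneB)"
    by (simp add: smult_add_left mulB_add1 algebra_simps)
  then show ?thesis using WB_intro VB_add \<open>z \<in> VB\<close> \<open>z' \<in> VB\<close> by metis
qed

lemma WB_smult: "x \<in> WB \<Longrightarrow> smult e x \<in> WB"
proof -
  assume "x \<in> WB"
  then obtain c z where "z \<in> VB" "x = smult c oneB + mulB z (X1 - oneB)" by (auto simp: WB_iff)
  then have "smult e x = smult (e * c) oneB + mulB (smult e z) (X1 - oneB)"
    by (simp add: smult_add smult_smult mulB_smult1)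
  then show ?thesis using WB_intro VB_smult \<open>z \<in> VB\<close> by metis
qed

lemma WB_neg: "x \<in> WB \<Longrightarrow> - x \<in> WB"
  using WB_smult[of x "-1"] by (simp add: smult_neg_left)

lemma WB_diff: "x \<in> WB \<Longrightarrow> y \<in> WB \<Longrightarrow> x - y \<in> WB"
  using WB_add[of x "-y"] WB_neg[of y] by simp

lemma WB_sum: "(\<And>i. i \<in> I \<Longrightarrow> F i \<in> WB) \<Longrightarrow> (\<Sum>i\<in>I. F i) \<in> WB"
  by (induction I rule: infinite_finite_induct) (auto intro: WB_add WB_zero)

lemma WB_mul: "x \<in> WB \<Longrightarrow> y \<in> WB \<Longrightarrow> mulB x y \<in> WB"
proof -
  assume "x \<in> WB" "y \<in> WB"
  then obtain c z d z' where z: "z \<in> VB" "x = smult c oneB + mulB z (X1 - oneB)"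
    and z': "z' \<in> VB" "y = smult d oneB + mulB z' (X1 - oneB)" by (auto simp: WB_iff)
  let ?b = "X1 - oneB"
  have bVB: "?b \<in> VB" by (simp add: VB_diff X1_VB oneB_VB)
  have "mulB x y = smult (c * d) oneB + mulB (smult c z' + smult d z + mulB (mulB z ?b) z') ?b"
    unfolding z z'
    by (simp add: mulB_add1 mulB_add2 mulB_smult1 mulB_smult2 mulB_one_left mulB_one_right oneB_VB
        mulB_VB smult_smult mulB_assoc smult_add algebra_simps VB_diff X1_VB)
  moreover have "smult c z' + smult d z + mulB (mulB z ?b) z' \<in> VB"
    using z z' by (intro VB_add VB_smult mulB_VB)
  ultimately show ?thesis using WB_intro by metis
qed

lemma genB_WB: "genB n \<in> WB"
  using WB_intro[OF X0pow_VB, of 0 n] by (simp add: genB_def)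

lemma filW_iff: "x \<in> filW n \<longleftrightarrow> x \<in> WB \<and> x \<in> filV n"
  by (simp add: filW_def)


section \<open>Magnus valuation determines the filtration\<close>

definition bgen :: "bool \<Rightarrow> letter list \<Rightarrow>\<^sub>0 'k::comm_ring_1" where
  "bgen i = Poly_Mapping.single [(i, False)] 1 - oneB"

fun psi :: "bool list \<Rightarrow> letter list \<Rightarrow>\<^sub>0 'k::comm_ring_1" where
  "psi [] = oneB"
| "psi (i # w) = mulB (bgen i) (psi w)"

fun bpow :: "bool \<Rightarrow> nat \<Rightarrow> (letter list \<Rightarrow>\<^sub>0 'k::comm_ring_1) \<Rightarrow> letter list \<Rightarrow>\<^sub>0 'k" where
  "bpow i 0 P = P"
| "bpow i (Suc k) P = mulB (bgen i) (bpow i k P)"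

lemma bgen_VB: "bgen i \<in> VB"
  by (simp add: bgen_def VB_diff VB_single reduced_single oneB_VB)

lemma magc_letter: "magc [a] = Ls a"
  by (simp add: magc_Cons magc_Nil cp_one1_right)

lemma Mg_bgen: "Mg (bgen i) = (\<lambda>v. if v = [i] then 1 else 0)"
  by (auto simp: fun_eq_iff bgen_def Mg_diff Mg_single Mg_oneB magc_letter Ls_def one1_def)

lemma bgen_augI: "bgen i \<in> augI"
  by (simp add: augI_iff bgen_VB Mg_bgen)

lemma psi_VB: "psi w \<in> VB"
  by (cases w) (auto simp: oneB_VB mulB_VB)

lemma psi_filV: "psi w \<in> filV (length w)"
  by (induction w) (auto simp: oneB_VB intro: filV_mul bgen_augI)

lemma cp_delta_letter: "cp (\<lambda>v. if v = [i] then 1 else 0) G v = (if v \<noteq> [] \<and> hd v = i then G (tl v) else 0)"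
proof (cases v)
  case Nil then show ?thesis by (simp add: cp_def)
next
  case (Cons b v')
  have "cp (\<lambda>v. if v = [i] then 1 else 0) G v = (\<Sum>k\<le>length (b # v'). if k = 1 then (if b = i then G v' else 0) else 0)"
    unfolding cp_def Cons
  proof (intro sum.cong refl)
    fix k assume k: "k \<in> {..length (b # v')}"
    show "(if take k (b # v') = [i] then 1 else 0) * G (drop k (b # v')) = (if k = 1 then (if b = i then G v' else 0) else 0)"
    proof (cases k)
      case 0 then show ?thesis by simp
    next
      case (Suc j)
      then show ?thesis using k by (cases j; cases v') auto
    qed
  qed
  then show ?thesis using Cons by (cases v') (auto simp: Suc_le_eq)
qed

lemma Mg_psi: "Mg (psi w :: letter list \<Rightarrow>\<^sub>0 'k::comm_ring_1) = (\<lambda>v. if v = w then 1 else 0)"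
proof (induction w)
  case Nil then show ?case by (simp add: Mg_oneB one1_def fun_eq_iff)
next
  case (Cons i w)
  show ?case
  proof
    fix v :: "bool list"
    show "Mg (psi (i # w) :: letter list \<Rightarrow>\<^sub>0 'k) v = (if v = i # w then 1 else 0)"
      by (cases v) (auto simp: Mg_mulB Mg_bgen Cons.IH cp_delta_letter)
  qed
qed

lemma bpow_shift: "bpow i k (mulB (bgen i) P) = bpow i (Suc k) P"
  by (induction k) auto

lemma psi_rep: "psi (replicate k i @ w) = bpow i k (psi w)"
  by (induction k) auto

lemma bpow_VB: "P \<in> VB \<Longrightarrow> bpow i k P \<in> VB"
  by (cases k) (auto simp: mulB_VB)

lemma bpow_filV: "P \<in> filV m \<Longrightarrow> bpow i k P \<in> filV (m + k)"
  by (induction k) (auto intro: filV_mul bgen_augI)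

definition Linv :: "bool \<Rightarrow> letter list \<Rightarrow>\<^sub>0 'k::comm_ring_1" where
  "Linv i = Poly_Mapping.single [(i, True)] 1"

lemma Linv_VB: "Linv i \<in> VB" by (simp add: Linv_def VB_single reduced_single)

lemma Linv_bgen: "mulB (Linv i) (bgen i) = oneB - Linv i"
proof -
  have "red [(i, True), (i, False)] = []" by (simp add: red_Cons red_cons_Cons cancel_def)
  then show ?thesis
    by (simp add: Linv_def bgen_def mulB_diff2 mulB_single mulB_one_right VB_single reduced_single oneB_def red_Cons)
qed

lemma Linv_minus_augI: "Linv i - oneB \<in> augI"
  by (simp add: augI_iff VB_diff VB_single reduced_single oneB_VB Mg_diff Mg_oneB one1_def Linv_def Mg_single magc_letter Ls_def)

lemma Linv_exp:
  fixes P :: "letter list \<Rightarrow>\<^sub>0 'k::comm_ring_1"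
  shows "P \<in> filV m \<Longrightarrow> mulB (Linv i) P - (\<Sum>k\<le>N. smult ((-1)^k) (bpow i k P)) \<in> filV (m + N + 1)"
proof (induction N arbitrary: P m)
  case 0
  have "mulB (Linv i) P - (\<Sum>k\<le>0. smult ((-1)^k) (bpow i k P)) = mulB (Linv i - oneB) P"
    using filV_VB[OF 0] by (simp add: mulB_diff1 mulB_one_left)
  then show ?case using filV_mul[OF Linv_minus_augI 0] by simp
next
  case (Suc N)
  let ?b = "mulB (bgen i) P"
  have bP: "?b \<in> filV (Suc m)" by (rule filV_mul[OF bgen_augI Suc.prems])
  have PV: "P \<in> VB" by (rule filV_VB[OF Suc.prems])
  have IH: "mulB (Linv i) ?b - (\<Sum>k\<le>N. smult ((-1)^k) (bpow i k ?b)) \<in> filV (Suc m + N + 1)"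
    by (rule Suc.IH[OF bP])
  have e1: "mulB (Linv i) ?b = P - mulB (Linv i) P"
    by (simp add: mulB_assoc[symmetric] Linv_bgen mulB_diff1 mulB_one_left PV)
  have "(\<Sum>k\<le>Suc N. smult ((-1)^k) (bpow i k P)) = smult ((-1)^0) (bpow i 0 P) + (\<Sum>k\<le>N. smult ((-1)^(Suc k)) (bpow i (Suc k) P))"
    by (rule sum.atMost_Suc_shift)
  also have "(\<Sum>k\<le>N. smult ((-1)^(Suc k)) (bpow i (Suc k) P)) = (\<Sum>k\<le>N. - smult ((-1)^k) (bpow i k ?b))"
    by (rule sum.cong[OF refl]) (simp only: bpow_shift[symmetric] power_Suc mult_minus1 smult_neg_left)
  also have "smult ((-1)^0) (bpow i 0 P) + (\<Sum>k\<le>N. - smult ((-1)^k) (bpow i k ?b)) = P - (\<Sum>k\<le>N. smult ((-1)^k) (bpow i k ?b))"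
    by (simp only: sum_negf power_0 smult_one bpow.simps(1) diff_conv_add_uminus)
  finally have e2: "(\<Sum>k\<le>Suc N. smult ((-1)^k) (bpow i k P)) = P - (\<Sum>k\<le>N. smult ((-1)^k) (bpow i k ?b))" .
  have "mulB (Linv i) P - (\<Sum>k\<le>Suc N. smult ((-1)^k) (bpow i k P))
       = mulB (Linv i) P - (P - (\<Sum>k\<le>N. smult ((-1)^k) (bpow i k ?b)))"
    by (simp only: e2)
  also have "\<dots> = - ((P - mulB (Linv i) P) - (\<Sum>k\<le>N. smult ((-1)^k) (bpow i k ?b)))"
    by (simp add: algebra_simps)
  also have "\<dots> = - (mulB (Linv i) ?b - (\<Sum>k\<le>N. smult ((-1)^k) (bpow i k ?b)))"
    by (simp only: e1)
  finally have "mulB (Linv i) P - (\<Sum>k\<le>Suc N. smult ((-1)^k) (bpow i k P))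
       = - (mulB (Linv i) ?b - (\<Sum>k\<le>N. smult ((-1)^k) (bpow i k ?b)))" .
  then show ?case using filV_neg[OF IH] by simp
qed


definition Wle :: "nat \<Rightarrow> bool list set" where
  "Wle n = {w. length w \<le> n}"

lemma finite_Wle: "finite (Wle n)"
proof -
  have "Wle n \<subseteq> {xs. set xs \<subseteq> (UNIV :: bool set) \<and> length xs \<le> n}" by (auto simp: Wle_def)
  then show ?thesis using finite_lists_length_le[of "UNIV :: bool set" n] finite_subset by auto
qed

definition Tn :: "nat \<Rightarrow> letter list \<Rightarrow> letter list \<Rightarrow>\<^sub>0 'k::comm_ring_1" where
  "Tn n g = (\<Sum>w\<in>Wle n. smult (magc g w) (psi w))"

lemma smult_sum_left: "smult (\<Sum>i\<in>I. c i) P = (\<Sum>i\<in>I. smult (c i) P)"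
  by (induction I rule: infinite_finite_induct) (auto simp: smult_add_left)

lemma reindex_cons:
  "(\<Sum>w\<in>Wle n. smult (case w of [] \<Rightarrow> 0 | b # w' \<Rightarrow> if b = i then c w' else 0) (psi w :: letter list \<Rightarrow>\<^sub>0 'k::comm_ring_1))
   = (\<Sum>w'\<in>{w'. Suc (length w') \<le> n}. smult (c w') (psi (i # w')))"
proof -
  let ?B = "{w'. Suc (length w') \<le> n}"
  let ?g = "\<lambda>w. smult (case w of [] \<Rightarrow> 0 | b # w' \<Rightarrow> if b = i then c w' else 0) (psi w :: letter list \<Rightarrow>\<^sub>0 'k)"
  have "(\<Sum>w'\<in>?B. smult (c w') (psi (i # w'))) = (\<Sum>w'\<in>?B. ?g (i # w'))" by simp
  also have "\<dots> = sum ?g ((Cons i) ` ?B)"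
    by (subst sum.reindex) (auto simp: inj_on_def)
  also have "\<dots> = sum ?g (Wle n)"
  proof (rule sum.mono_neutral_left[OF finite_Wle])
    show "(Cons i) ` ?B \<subseteq> Wle n" by (auto simp: Wle_def)
    show "\<forall>w\<in>Wle n - (Cons i) ` ?B. ?g w = 0"
    proof
      fix w assume w: "w \<in> Wle n - (Cons i) ` ?B"
      show "?g w = 0"
      proof (cases w)
        case Nil then show ?thesis by simp
      next
        case (Cons b w')
        then show ?thesis using w by (cases "b = i") (auto simp: Wle_def)
      qed
    qed
  qed
  finally show ?thesis by simp
qed

lemma C2: "Poly_Mapping.single (red g) (1::'k::comm_ring_1) - Tn n g \<in> filV (Suc n)"
proof (induction g arbitrary: n)
  case Nil
  have "(Tn n [] :: letter list \<Rightarrow>\<^sub>0 'k) = (\<Sum>w\<in>Wle n. if w = [] then psi w else 0)"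
    unfolding Tn_def by (intro sum.cong) auto
  also have "\<dots> = oneB" using finite_Wle by (simp add: Wle_def)
  finally show ?case by (simp add: oneB_def filV_zero)
next
  case (Cons a g)
  let ?La = "Poly_Mapping.single [a] (1::'k)"
  have LaV: "?La \<in> VB" by (simp add: VB_single reduced_single)
  have hs: "Poly_Mapping.single (red (a # g)) (1::'k) = mulB ?La (Poly_Mapping.single (red g) 1)"
    using red_red_right[of "[a]" g] by (simp add: mulB_single)
  define r where "r = Poly_Mapping.single (red g) (1::'k) - Tn n g"
  have r: "r \<in> filV (Suc n)" unfolding r_def by (rule Cons.IH)
  have e: "Poly_Mapping.single (red (a # g)) (1::'k) - Tn n (a # g) = mulB ?La r + (mulB ?La (Tn n g) - Tn n (a # g))"
    unfolding hs r_def by (simp add: mulB_diff2)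
  have mTn: "mulB ?La (Tn n g) = (\<Sum>w\<in>Wle n. smult (magc g w) (mulB ?La (psi w)))"
    by (simp add: Tn_def mulB_sum2 mulB_smult2)
  have D: "mulB ?La (Tn n g) - Tn n (a # g) \<in> filV (Suc n)"
  proof (cases "snd a")
    case False
    obtain i where a: "a = (i, False)" using False by (cases a) auto
    have La: "?La = bgen i + oneB" by (simp add: bgen_def a)
    let ?X = "\<lambda>w. smult (magc g w) (psi (i # w) :: letter list \<Rightarrow>\<^sub>0 'k)"
    let ?B = "{w'. Suc (length w') \<le> n}"
    have m1: "mulB ?La (Tn n g) = (\<Sum>w\<in>Wle n. ?X w) + Tn n g"
      apply (subst mTn)
      by (simp add: La mulB_add1 mulB_one_left psi_VB smult_add sum.distrib Tn_def)
    have m2: "(Tn n (a # g) :: letter list \<Rightarrow>\<^sub>0 'k) = Tn n g +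
        (\<Sum>w\<in>Wle n. smult (case w of [] \<Rightarrow> 0 | b # w' \<Rightarrow> if b = i then magc g w' else 0) (psi w))"
      unfolding Tn_def a by (simp add: smult_add_left sum.distrib cong: list.case_cong)
    have "mulB ?La (Tn n g) - Tn n (a # g) = (\<Sum>w\<in>Wle n. ?X w) - (\<Sum>w\<in>?B. ?X w)"
      unfolding m1 m2 reindex_cons by simp
    also have "\<dots> = (\<Sum>w\<in>Wle n - ?B. ?X w)"
      by (rule sum_diff[symmetric, OF finite_Wle]) (auto simp: Wle_def)
    also have "\<dots> \<in> filV (Suc n)"
    proof (rule filV_sum)
      fix w assume "w \<in> Wle n - ?B"
      then have "length w = n" by (auto simp: Wle_def)
      then show "?X w \<in> filV (Suc n)" using psi_filV[of "i # w"] by (auto intro: filV_smult)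
    qed
    finally show ?thesis .
  next
    case True
    obtain i where a: "a = (i, True)" using True by (cases a) auto
    have La: "?La = Linv i" by (simp add: Linv_def a)
    define R where "R w = (\<Sum>k\<le>n - length w. smult ((-1)^k) (bpow i k (psi w :: letter list \<Rightarrow>\<^sub>0 'k)))" for w
    have d1: "mulB ?La (Tn n g) - (\<Sum>w\<in>Wle n. smult (magc g w) (R w)) \<in> filV (Suc n)"
    proof -
      have "mulB ?La (Tn n g) - (\<Sum>w\<in>Wle n. smult (magc g w) (R w))
          = (\<Sum>w\<in>Wle n. smult (magc g w) (mulB (Linv i) (psi w) - R w))"
        unfolding La by (simp add: Tn_def mulB_sum2 mulB_smult2 smult_diff sum_subtractf)
      also have "\<dots> \<in> filV (Suc n)"
      proof (rule filV_sum)
        fix w assume w: "w \<in> Wle n"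
        have "mulB (Linv i) (psi w) - R w \<in> filV (length w + (n - length w) + 1)"
          unfolding R_def by (rule Linv_exp[OF psi_filV])
        moreover have "length w + (n - length w) + 1 = Suc n" using w by (simp add: Wle_def)
        ultimately show "smult (magc g w) (mulB (Linv i) (psi w) - R w) \<in> filV (Suc n)"
          by (simp add: filV_smult)
      qed
      finally show ?thesis .
    qed
    have d2: "(\<Sum>w\<in>Wle n. smult (magc g w) (R w)) = Tn n (a # g)"
    proof -
      let ?S2 = "Sigma (Wle n) (\<lambda>w. {..n - length w})"
      let ?S1' = "Sigma (Wle n) (\<lambda>v. {0..length v})"
      let ?S1 = "{x \<in> ?S1'. take (snd x) (fst x) = replicate (snd x) i}"
      let ?G2 = "\<lambda>w k. smult (magc g w * (-1)^k) (psi (replicate k i @ w) :: letter list \<Rightarrow>\<^sub>0 'k)"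
      let ?G1 = "\<lambda>v k. if take k v = replicate k i then smult ((-1)^k * magc g (drop k v)) (psi v :: letter list \<Rightarrow>\<^sub>0 'k) else 0"
      let ?F2 = "case_prod ?G2"
      let ?F1 = "\<lambda>(v, k). smult ((-1)^k * magc g (drop k v)) (psi v :: letter list \<Rightarrow>\<^sub>0 'k)"
      have fin1: "finite ?S1'" using finite_Wle by auto
      have "(\<Sum>w\<in>Wle n. smult (magc g w) (R w)) = (\<Sum>w\<in>Wle n. \<Sum>k\<le>n - length w. ?G2 w k)"
        unfolding R_def by (simp add: smult_sum smult_smult psi_rep)
      also have "\<dots> = sum ?F2 ?S2"
        by (rule sum.Sigma) (auto simp: finite_Wle)
      also have "\<dots> = sum ?F1 ?S1"
      proof (rule sum.reindex_bij_witness[where j = "\<lambda>(w, k). (replicate k i @ w, k)" and i = "\<lambda>(v, k). (drop k v, k)"])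
        show "\<And>a. a \<in> ?S2 \<Longrightarrow> (case case a of (w, k) \<Rightarrow> (replicate k i @ w, k) of (v, k) \<Rightarrow> (drop k v, k)) = a"
          by auto
        show "\<And>a. a \<in> ?S2 \<Longrightarrow> (case a of (w, k) \<Rightarrow> (replicate k i @ w, k)) \<in> ?S1"
          by (auto simp: Wle_def)
        show "\<And>b. b \<in> ?S1 \<Longrightarrow> (case case b of (v, k) \<Rightarrow> (drop k v, k) of (w, k) \<Rightarrow> (replicate k i @ w, k)) = b"
          by (auto simp: append_take_drop_id[symmetric]) (metis append_take_drop_id)
        show "\<And>b. b \<in> ?S1 \<Longrightarrow> (case b of (v, k) \<Rightarrow> (drop k v, k)) \<in> ?S2"
          by (auto simp: Wle_def)
        show "\<And>a. a \<in> ?S2 \<Longrightarrow> ?F1 (case a of (w, k) \<Rightarrow> (replicate k i @ w, k)) = ?F2 a"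
          by (auto simp: mult.commute)
      qed
      also have "\<dots> = (\<Sum>x\<in>?S1'. if take (snd x) (fst x) = replicate (snd x) i then ?F1 x else 0)"
        by (rule sum.inter_filter[OF fin1])
      also have "\<dots> = sum (case_prod ?G1) ?S1'"
        by (intro sum.cong) auto
      also have "\<dots> = (\<Sum>v\<in>Wle n. \<Sum>k\<in>{0..length v}. ?G1 v k)"
        by (rule sum.Sigma[symmetric]) (auto simp: finite_Wle)
      also have "\<dots> = Tn n (a # g)"
        unfolding Tn_def a
        by (auto simp: smult_sum_left intro!: sum.cong)
      finally show ?thesis .
    qed
    show ?thesis using d1 unfolding d2 .
  qed
  show ?case unfolding e
    by (rule filV_add[OF filV_left[OF LaV r] D])
qed


lemma filV_of_vanish:
  fixes f :: "letter list \<Rightarrow>\<^sub>0 'k::comm_ring_1"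
  assumes f: "f \<in> VB" and van: "\<And>w. length w \<le> n \<Longrightarrow> Mg f w = 0"
  shows "f \<in> filV (Suc n)"
proof -
  have f1: "f = (\<Sum>g\<in>ks f. smult (lk f g) (Poly_Mapping.single (red g) 1))"
  proof -
    have "f = (\<Sum>g\<in>ks f. Poly_Mapping.single g (lk f g))" by (rule pm_decomp)
    also have "\<dots> = (\<Sum>g\<in>ks f. smult (lk f g) (Poly_Mapping.single (red g) 1))"
      using f by (intro sum.cong refl) (auto simp: smult_single VB_def reduced_def)
    finally show ?thesis .
  qed
  have f2: "(\<Sum>g\<in>ks f. smult (lk f g) (Tn n g :: letter list \<Rightarrow>\<^sub>0 'k)) = 0"
  proof -
    have "(\<Sum>g\<in>ks f. smult (lk f g) (Tn n g :: letter list \<Rightarrow>\<^sub>0 'k))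
        = (\<Sum>g\<in>ks f. \<Sum>w\<in>Wle n. smult (lk f g * magc g w) (psi w))"
      by (simp add: Tn_def smult_sum smult_smult)
    also have "\<dots> = (\<Sum>w\<in>Wle n. \<Sum>g\<in>ks f. smult (lk f g * magc g w) (psi w))"
      by (rule sum.swap)
    also have "\<dots> = (\<Sum>w\<in>Wle n. smult (Mg f w) (psi w))"
      by (simp add: Mg_def smult_sum_left)
    also have "\<dots> = 0"
      by (intro sum.neutral) (auto simp: Wle_def van)
    finally show ?thesis .
  qed
  have "f = (\<Sum>g\<in>ks f. smult (lk f g) (Poly_Mapping.single (red g) 1 - Tn n g))"
    using f1 f2 by (simp add: smult_diff sum_subtractf)
  also have "\<dots> \<in> filV (Suc n)"
    by (intro filV_sum filV_smult C2)
  finally show ?thesis .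
qed


section \<open>Binomial identities\<close>

lemma I1:
  "(\<Sum>k\<le>m. (-1)^(m-k) * of_nat (m choose k) * of_nat (k choose a) :: 'k::comm_ring_1) = (if a = m then 1 else 0)"
proof (cases "a \<le> m")
  case False
  then show ?thesis by (auto intro!: sum.neutral simp: binomial_eq_0)
next
  case True
  define N where "N = m - a"
  let ?f = "\<lambda>k. (-1)^(m-k) * of_nat (m choose k) * of_nat (k choose a) :: 'k"
  have "(\<Sum>k\<le>m. ?f k) = (\<Sum>k\<in>{a..m}. ?f k)"
    by (rule sum.mono_neutral_right) (auto simp: binomial_eq_0)
  also have "{a..m} = {0+a..N+a}" using True by (simp add: N_def)
  also have "(\<Sum>k\<in>{0+a..N+a}. ?f k) = (\<Sum>j\<in>{0..N}. ?f (j + a))"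
    by (rule sum.shift_bounds_cl_nat_ivl)
  also have "\<dots> = (\<Sum>j\<le>N. of_nat (m choose a) * (of_nat (N choose j) * 1^j * (-1)^(N-j)))"
  proof (intro sum.cong)
    show "{0..N} = {..N}" by auto
  next
    fix j assume j: "j \<in> {..N}"
    have "(m choose (j + a)) * ((j + a) choose a) = (m choose a) * ((m - a) choose (j + a - a))"
      by (rule choose_mult) (use j True in \<open>auto simp: N_def\<close>)
    then have e: "of_nat (m choose (j + a)) * of_nat ((j + a) choose a) = (of_nat (m choose a) * of_nat (N choose j) :: 'k)"
      by (simp add: N_def flip: of_nat_mult)
    have mj: "m - (j + a) = N - j" by (simp add: N_def)
    have "?f (j + a) = (-1)^(N-j) * (of_nat (m choose (j + a)) * of_nat ((j + a) choose a))"
      by (simp only: mj mult.assoc)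
    also have "\<dots> = (-1)^(N-j) * (of_nat (m choose a) * of_nat (N choose j))" by (simp only: e)
    finally show "?f (j + a) = of_nat (m choose a) * (of_nat (N choose j) * 1^j * (-1)^(N-j))"
      by (simp add: mult_ac)
  qed
  also have "\<dots> = of_nat (m choose a) * (1 + (-1))^N"
  proof -
    have bin: "(1 + (-1::'k))^N = (\<Sum>j\<le>N. of_nat (N choose j) * 1^j * (-1)^(N-j))" by (rule binomial_ring)
    show ?thesis by (simp only: bin sum_distrib_left)
  qed
  also have "\<dots> = (if a = m then 1 else 0)"
  proof (cases "a = m")
    case False
    then have "N \<noteq> 0" using True by (simp add: N_def)
    then show ?thesis using False by (simp add: zero_power)
  qed (simp add: N_def)
  finally show ?thesis .
qed

lemma vand_upper: "(\<Sum>j\<le>k. (j choose a) * ((k - j) choose b)) = Suc k choose (a + b + 1)"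
proof (induction k arbitrary: b)
  case 0 then show ?case by (cases a; cases b) auto
next
  case (Suc k)
  show ?case
  proof (cases b)
    case 0
    then show ?thesis using sum_choose_upper[of a "Suc k"] by simp
  next
    case (Suc b')
    have "(\<Sum>j\<le>Suc k. (j choose a) * ((Suc k - j) choose b))
        = (\<Sum>j\<le>k. (j choose a) * ((Suc k - j) choose b))"
      using Suc by simp
    also have "\<dots> = (\<Sum>j\<le>k. (j choose a) * ((k - j) choose b') + (j choose a) * ((k - j) choose b))"
      by (intro sum.cong refl) (auto simp: Suc Suc_diff_le algebra_simps)
    also have "\<dots> = (Suc k choose (a + b' + 1)) + (Suc k choose (a + b + 1))"
      by (simp add: sum.distrib Suc.IH)
    also have "\<dots> = Suc (Suc k) choose (a + b + 1)"
      using Suc by simp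
    finally show ?thesis .
  qed
qed

definition Sx :: "nat \<Rightarrow> nat \<Rightarrow> nat \<Rightarrow> 'k::comm_ring_1" where
  "Sx a b k = (if k = 0 then - (of_nat (0 choose a) * of_nat (0 choose b))
               else (\<Sum>j\<in>{1..k-1}. of_nat (j choose a) * of_nat ((k - j) choose b)))"

lemma Sx_eq: "Sx a b k = (of_nat (Suc k choose (a + b + 1)) - (if a = 0 then of_nat (k choose b) else 0)
                  - (if b = 0 then of_nat (k choose a) else 0) :: 'k::comm_ring_1)"
proof (cases k)
  case 0 then show ?thesis by (cases a; cases b) (auto simp: Sx_def)
next
  case (Suc k')
  have "(\<Sum>j\<le>k. (j choose a) * ((k - j) choose b)) =
        (0 choose a) * (k choose b) + ((\<Sum>j\<in>{1..k-1}. (j choose a) * ((k - j) choose b)) + (k choose a) * (0 choose b))"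
  proof -
    have "{..k} = insert 0 (insert k {1..k-1})" using Suc by auto
    then show ?thesis using Suc by (simp add: add.commute)
  qed
  then have "(of_nat (Suc k choose (a + b + 1)) :: 'k) =
        of_nat ((0 choose a) * (k choose b)) + (of_nat (\<Sum>j\<in>{1..k-1}. (j choose a) * ((k - j) choose b)) + of_nat ((k choose a) * (0 choose b)))"
    by (simp only: vand_upper of_nat_add)
  then show ?thesis using Suc by (cases a; cases b) (auto simp: Sx_def algebra_simps)
qed

lemma I2:
  assumes "a + b + 1 = m"
  shows "(\<Sum>k\<le>m. (-1)^(m-k) * of_nat (m choose k) * Sx a b k :: 'k::comm_ring_1) = 1"
proof -
  let ?e = "\<lambda>k. (-1)^(m-k) * of_nat (m choose k) :: 'k"
  obtain m' where m: "m = Suc m'" using assms by (cases m) auto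
  have A: "(\<Sum>k\<le>m. ?e k * of_nat (Suc k choose (a + b + 1))) = 1"
  proof -
    have "(\<Sum>k\<le>m. ?e k * of_nat (Suc k choose (a + b + 1))) =
          (\<Sum>k\<le>m. ?e k * of_nat (k choose m)) + (\<Sum>k\<le>m. ?e k * of_nat (k choose m'))"
      using assms m by (simp add: sum.distrib[symmetric] algebra_simps)
    also have "\<dots> = 1" using I1[of m m, where 'k='k] I1[of m m', where 'k='k] m by (simp add: mult.assoc)
    finally show ?thesis .
  qed
  have B: "(\<Sum>k\<le>m. ?e k * of_nat (k choose b)) = 0" using I1[of m b, where 'k='k] assms by (simp add: mult.assoc)
  have C: "(\<Sum>k\<le>m. ?e k * of_nat (k choose a)) = 0" using I1[of m a, where 'k='k] assms by (simp add: mult.assoc)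
  have "(\<Sum>k\<le>m. ?e k * Sx a b k) = (\<Sum>k\<le>m. ?e k * of_nat (Suc k choose (a + b + 1)))
      - (if a = 0 then (\<Sum>k\<le>m. ?e k * of_nat (k choose b)) else 0)
      - (if b = 0 then (\<Sum>k\<le>m. ?e k * of_nat (k choose a)) else 0)"
    by (simp add: Sx_eq algebra_simps sum_subtractf sum.distrib)
  also have "\<dots> = 1 - (if a = 0 then 0 else 0) - (if b = 0 then 0 else 0)" by (simp only: A B C)
  also have "\<dots> = 1" by simp
  finally show ?thesis by (simp add: mult.assoc)
qed


section \<open>Magnus expansion of the generators\<close>

definition blk :: "nat \<Rightarrow> bool list" where
  "blk a = replicate a False @ [True]"

lemma blk_inj: "blk a = blk b \<longleftrightarrow> a = b"
  by (auto simp: blk_def dest: arg_cong[of _ _ length])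

lemma length_blk[simp]: "length (blk a) = Suc a"
  by (simp add: blk_def)

lemma magc_X0rep: "magc (replicate k (False, False)) w = (if w = replicate (length w) False then of_nat (k choose length w) else 0)"
proof (induction k arbitrary: w)
  case 0 then show ?case by (cases w) auto
next
  case (Suc k)
  show ?case
  proof (cases w)
    case Nil then show ?thesis using Suc by simp
  next
    case (Cons b w')
    then show ?thesis using Suc by (cases b) auto
  qed
qed

lemma Mg_X0pow: "Mg (X0pow (int k) :: letter list \<Rightarrow>\<^sub>0 'k::comm_ring_1) w = (if w = replicate (length w) False then of_nat (k choose length w) else 0)"
  by (simp add: X0pow_def Mg_single magc_X0rep)

lemma Mg_b1: "Mg (X1 - oneB :: letter list \<Rightarrow>\<^sub>0 'k::comm_ring_1) = (\<lambda>w. if w = [True] then 1 else 0)"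
  by (auto simp: fun_eq_iff X1_def Mg_diff Mg_single Mg_oneB magc_letter Ls_def one1_def)

lemma cp_delta_right: "cp F (\<lambda>v. if v = [True] then 1 else 0) w = (if w \<noteq> [] \<and> last w = True then F (butlast w) else 0)"
proof (cases "w = []")
  case True then show ?thesis by (simp add: cp_def)
next
  case False
  have "cp F (\<lambda>v. if v = [True] then 1 else 0) w = (\<Sum>i\<le>length w. if i = length w - 1 then (if last w = True then F (butlast w) else 0) else 0)"
    unfolding cp_def
  proof (intro sum.cong refl)
    fix i assume i: "i \<in> {..length w}"
    have dl: "drop (length w - 1) w = [last w]" using False
      by (metis append_butlast_last_id append_eq_conv_conj length_butlast)
    show "F (take i w) * (if drop i w = [True] then 1 else 0) = (if i = length w - 1 then (if last w = True then F (butlast w) else 0) else 0)"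
    proof (cases "i = length w - 1")
      case True then show ?thesis using dl by (simp add: butlast_conv_take)
    next
      case ne: False
      have l1: "length (drop i w) \<noteq> 1" using ne i by auto
      have "drop i w \<noteq> [True]"
      proof
        assume "drop i w = [True]"
        then have "length (drop i w) = 1" by simp
        with l1 show False by blast
      qed
      then show ?thesis using ne by simp
    qed
  qed
  then show ?thesis using False by simp
qed

lemma blk_char: "(\<exists>a. w = blk a) \<longleftrightarrow> (w \<noteq> [] \<and> last w = True \<and> butlast w = replicate (length (butlast w)) False)"
proof
  assume "\<exists>a. w = blk a" then show "w \<noteq> [] \<and> last w = True \<and> butlast w = replicate (length (butlast w)) False"
    by (auto simp: blk_def)
next
  assume h: "w \<noteq> [] \<and> last w = True \<and> butlast w = replicate (length (butlast w)) False"
  have hb: "replicate (length (butlast w)) False = butlast w" using h by metis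
  have hl: "last w = True" using h by blast
  have "blk (length (butlast w)) = butlast w @ [last w]" by (simp only: blk_def hb hl)
  also have "\<dots> = w" using h append_butlast_last_id by blast
  finally show "\<exists>a. w = blk a" by metis
qed

lemma Mg_genB: "Mg (genB (int k) :: letter list \<Rightarrow>\<^sub>0 'k::comm_ring_1) w =
   (if (\<exists>a. w = blk a) then of_nat (k choose (length w - 1)) else 0)"
proof -
  have "Mg (genB (int k) :: letter list \<Rightarrow>\<^sub>0 'k) w = cp (Mg (X0pow (int k))) (\<lambda>w. if w = [True] then 1 else 0) w"
    by (simp add: genB_def Mg_mulB Mg_b1)
  also have "\<dots> = (if w \<noteq> [] \<and> last w = True then Mg (X0pow (int k) :: letter list \<Rightarrow>\<^sub>0 'k) (butlast w) else 0)"
    by (rule cp_delta_right)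
  also have "\<dots> = (if (\<exists>a. w = blk a) then of_nat (k choose (length w - 1)) else 0)"
    unfolding blk_char Mg_X0pow by auto
  finally show ?thesis .
qed

definition ugen :: "nat \<Rightarrow> letter list \<Rightarrow>\<^sub>0 'k::comm_ring_1" where
  "ugen m = (\<Sum>k\<le>m. smult ((-1)^(m-k) * of_nat (m choose k)) (genB (int k)))"

lemma ugen_WB: "ugen m \<in> WB"
  unfolding ugen_def by (intro WB_sum WB_smult genB_WB)

lemma Mg_ugen: "Mg (ugen m :: letter list \<Rightarrow>\<^sub>0 'k::comm_ring_1) w = (if w = blk m then 1 else 0)"
proof (cases "\<exists>a. w = blk a")
  case False
  then show ?thesis by (auto simp: ugen_def Mg_sum Mg_smult Mg_genB)
next
  case True
  then obtain a where a: "w = blk a" by blast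
  have "Mg (ugen m :: letter list \<Rightarrow>\<^sub>0 'k) w = (\<Sum>k\<le>m. (-1)^(m-k) * of_nat (m choose k) * of_nat (k choose a))"
    by (simp add: ugen_def Mg_sum Mg_smult Mg_genB a blk_inj)
  also have "\<dots> = (if a = m then 1 else 0)" by (rule I1)
  finally show ?thesis by (simp add: a blk_inj)
qed


lemma finite_len_eq: "finite {w :: bool list. length w = n}"
  using finite_Wle[of n] by (rule finite_subset[rotated]) (auto simp: Wle_def)

lemma finite_len_pair: "finite {(u :: bool list, v :: bool list). length u + length v = n}"
proof -
  have "{(u :: bool list, v :: bool list). length u + length v = n} \<subseteq> Wle n \<times> Wle n" by (auto simp: Wle_def)
  then show ?thesis using finite_Wle by (meson finite_SigmaI finite_subset)
qed

lemma lk_beta1: "lk (beta1 n f) w = (if length w = n then Mg f w else 0)"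
proof -
  have "lk (beta1 n f) w = (\<Sum>w'\<in>{w. length w = n}. if w = w' then (\<Sum>u\<in>ks f. lk f u * magc u w') else 0)"
    by (simp add: beta1_def lookup_sum lk_single)
  also have "\<dots> = (if length w = n then Mg f w else 0)"
    using finite_len_eq by (simp add: sum.delta Mg_def)
  finally show ?thesis .
qed

lemma lk_beta2: "lk (beta2 n F) pq = (if length (fst pq) + length (snd pq) = n then M2 F pq else 0)"
proof -
  have "lk (beta2 n F) pq = (\<Sum>p'\<in>{(u, v). length u + length v = n}. if pq = p' then (\<Sum>x\<in>ks F. lk F x * magc (fst x) (fst p') * magc (snd x) (snd p')) else 0)"
    by (simp add: beta2_def lookup_sum lk_single)
  also have "\<dots> = (if length (fst pq) + length (snd pq) = n then M2 F pq else 0)"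
    using finite_len_pair[of n] by (cases pq) (simp add: sum.delta M2_def)
  finally show ?thesis .
qed

lemma beta2_add: "beta2 n (F + G) = beta2 n F + beta2 n G"
  by (rule poly_mapping_eqI) (simp add: lk_beta2 lookup_add M2_add)

lemma beta2_smult: "beta2 n (smult c F) = smult c (beta2 n F)"
  by (rule poly_mapping_eqI) (simp add: lk_beta2 M2_smult)

lemma beta2_zero: "beta2 n 0 = 0"
  by (rule poly_mapping_eqI) (simp add: lk_beta2)

lemma beta2_sum: "beta2 n (\<Sum>i\<in>I. F i) = (\<Sum>i\<in>I. beta2 n (F i))"
  by (induction I rule: infinite_finite_induct) (auto simp: beta2_add beta2_zero)

lemma beta2_vanish: "(\<And>p q. length p + length q < Suc n \<Longrightarrow> M2 F (p, q) = 0) \<Longrightarrow> beta2 n F = 0"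
  by (rule poly_mapping_eqI) (auto simp: lk_beta2)

lemma lk_tens: "lk (tens a b) (p, q) = lk a p * lk b q"
proof -
  have "lk (tens a b) (p, q) = (\<Sum>u\<in>ks a. \<Sum>v\<in>ks b. if p = u \<and> q = v then lk a u * lk b v else 0)"
    by (simp add: tens_def lookup_sum lk_single)
  also have "\<dots> = (\<Sum>u\<in>ks a. if p = u then (\<Sum>v\<in>ks b. if q = v then lk a u * lk b v else 0) else 0)"
    by (intro sum.cong refl) auto
  also have "\<dots> = lk a p * lk b q"
    by (simp add: sum.delta in_keys_iff)
  finally show ?thesis .
qed

lemma spl_sum:
  fixes f g :: "bool list \<times> bool list \<Rightarrow> 'k::comm_ring_1"
  assumes X: "finite X" "\<And>x. x \<notin> X \<Longrightarrow> f x = 0" and Y: "finite Y" "\<And>y. y \<notin> Y \<Longrightarrow> g y = 0"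
  shows "(\<Sum>x\<in>X. \<Sum>y\<in>Y. if (fst x @ fst y, snd x @ snd y) = (p, q) then f x * g y else 0) = cp2 f g (p, q)"
proof -
  define h where "h = (\<lambda>ij. ((take (fst ij) p, take (snd ij) q), (drop (fst ij) p, drop (snd ij) q)))"
  define I where "I = {..length p} \<times> {..length q}"
  define Spl where "Spl = {xy. fst (fst xy) @ fst (snd xy) = p \<and> snd (fst xy) @ snd (snd xy) = q}"
  define F where "F = (\<lambda>xy. f (fst xy) * g (snd xy))"
  have inj: "inj_on h I"
  proof (rule inj_onI)
    fix a b assume a: "a \<in> I" and b: "b \<in> I" and e: "h a = h b"
    have e1: "take (fst a) p = take (fst b) p" and e2: "take (snd a) q = take (snd b) q"
      using e unfolding h_def by simp_all
    have "length (take (fst a) p) = fst a" "length (take (fst b) p) = fst b"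
         "length (take (snd a) q) = snd a" "length (take (snd b) q) = snd b"
      using a b unfolding I_def by (auto simp: min_def)
    then have "fst a = fst b" "snd a = snd b" using e1 e2 by metis+
    then show "a = b" by (simp add: prod_eq_iff)
  qed
  have img: "h ` I = Spl"
  proof
    show "h ` I \<subseteq> Spl" unfolding h_def Spl_def by auto
    show "Spl \<subseteq> h ` I"
    proof
      fix xy assume xy: "xy \<in> Spl"
      define x1 where "x1 = fst (fst xy)"
      define x2 where "x2 = snd (fst xy)"
      define y1 where "y1 = fst (snd xy)"
      define y2 where "y2 = snd (snd xy)"
      have e: "x1 @ y1 = p" "x2 @ y2 = q" using xy unfolding Spl_def x1_def x2_def y1_def y2_def by auto
      have xyd: "xy = ((x1, x2), (y1, y2))" unfolding x1_def x2_def y1_def y2_def by simp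
      have "h (length x1, length x2) = ((x1, x2), (y1, y2))"
        unfolding h_def e[symmetric] by simp
      moreover have "(length x1, length x2) \<in> I" unfolding I_def e[symmetric] by simp
      ultimately show "xy \<in> h ` I" unfolding xyd by (metis image_eqI)
    qed
  qed
  have finSpl: "finite Spl" unfolding img[symmetric] I_def by simp
  have "cp2 f g (p, q) = (\<Sum>(i, j)\<in>I. f (take i p, take j q) * g (drop i p, drop j q))"
    unfolding cp2_def I_def by (simp add: sum.cartesian_product)
  also have "\<dots> = (\<Sum>ij\<in>I. F (h ij))"
    unfolding F_def h_def by (simp add: case_prod_beta)
  also have "\<dots> = sum F (h ` I)"
    by (rule sum.reindex[symmetric, OF inj, unfolded comp_def])
  also have "\<dots> = sum F Spl" by (simp only: img)
  also have "\<dots> = sum F {xy \<in> X \<times> Y. xy \<in> Spl}"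
  proof (rule sum.mono_neutral_right[OF finSpl])
    show "{xy \<in> X \<times> Y. xy \<in> Spl} \<subseteq> Spl" by blast
    show "\<forall>xy\<in>Spl - {xy \<in> X \<times> Y. xy \<in> Spl}. F xy = 0"
    proof
      fix xy assume "xy \<in> Spl - {xy \<in> X \<times> Y. xy \<in> Spl}"
      then have "fst xy \<notin> X \<or> snd xy \<notin> Y" by (auto simp: mem_Times_iff)
      then show "F xy = 0" unfolding F_def using X(2)[of "fst xy"] Y(2)[of "snd xy"] by (metis mult_zero_left mult_zero_right)
    qed
  qed
  also have "\<dots> = (\<Sum>xy\<in>X \<times> Y. if xy \<in> Spl then F xy else 0)"
    by (rule sum.inter_filter) (simp add: X(1) Y(1))
  also have "\<dots> = (\<Sum>x\<in>X. \<Sum>y\<in>Y. if (fst x @ fst y, snd x @ snd y) = (p, q) then f x * g y else 0)"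
    unfolding Spl_def F_def by (subst sum.cartesian_product) (simp add: case_prod_beta)
  finally show ?thesis by simp
qed

lemma lk_mulDD: "lk (mulDD A B) (p, q) = cp2 (lk A) (lk B) (p, q)"
proof -
  have "lk (mulDD A B) (p, q) = (\<Sum>x\<in>ks A. \<Sum>y\<in>ks B. if (fst x @ fst y, snd x @ snd y) = (p, q) then lk A x * lk B y else 0)"
    unfolding mulDD_def lookup_conv by (intro sum.cong refl) (auto simp: case_prod_beta)
  also have "\<dots> = cp2 (lk A) (lk B) (p, q)"
    by (rule spl_sum) (auto simp: in_keys_iff)
  finally show ?thesis .
qed

lemma beta2_mul:
  assumes vF: "\<And>p q. length p + length q < i \<Longrightarrow> M2 F (p, q) = 0"
      and vG: "\<And>p q. length p + length q < j \<Longrightarrow> M2 G (p, q) = 0"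
  shows "beta2 (i + j) (mulBB F G) = mulDD (beta2 i F) (beta2 j G)"
proof (rule poly_mapping_eqI)
  fix pq :: "bool list \<times> bool list"
  obtain p q where pq: "pq = (p, q)" by (cases pq)
  have trm: "(if length p + length q = i + j then M2 F (take i' p, take j' q) * M2 G (drop i' p, drop j' q) else 0)
      = lk (beta2 i F) (take i' p, take j' q) * lk (beta2 j G) (drop i' p, drop j' q)"
    if ij: "i' \<le> length p" "j' \<le> length q" for i' j'
  proof -
    have l1: "length (take i' p) + length (take j' q) = i' + j'" using ij by simp
    have l2: "length (drop i' p) + length (drop j' q) = length p + length q - (i' + j')" using ij by simp
    have ltF: "lk (beta2 i F) (take i' p, take j' q) = (if i' + j' = i then M2 F (take i' p, take j' q) else 0)"
      unfolding lk_beta2 fst_conv snd_conv l1 by (rule refl)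
    have ltG: "lk (beta2 j G) (drop i' p, drop j' q) = (if length p + length q - (i' + j') = j then M2 G (drop i' p, drop j' q) else 0)"
      unfolding lk_beta2 fst_conv snd_conv l2 by (rule refl)
    have le: "i' + j' \<le> length p + length q" using ij by simp
    show ?thesis
    proof (cases "i' + j' < i")
      case True
      then have "M2 F (take i' p, take j' q) = 0" using vF l1 by metis
      then show ?thesis unfolding ltF ltG using True by simp
    next
      case False
      show ?thesis
      proof (cases "i' + j' = i")
        case True
        have "(length p + length q - (i' + j') = j) = (length p + length q = i + j)" using True le by arith
        then show ?thesis unfolding ltF ltG using True by simp
      next
        case False2: False
        then have gt: "i' + j' > i" using False by simp
        show ?thesis
        proof (cases "length p + length q = i + j")
          case True
          then have "length (drop i' p) + length (drop j' q) < j" using l2 gt le by arith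
          then have "M2 G (drop i' p, drop j' q) = 0" using vG by metis
          then show ?thesis unfolding ltF ltG using False2 by simp
        next
          case False3: False
          then show ?thesis unfolding ltF ltG using False2 by simp
        qed
      qed
    qed
  qed
  have "lk (beta2 (i + j) (mulBB F G)) (p, q) = (if length p + length q = i + j then cp2 (M2 F) (M2 G) (p, q) else 0)"
    by (simp add: lk_beta2 M2_mulBB)
  also have "\<dots> = (\<Sum>i'\<le>length p. \<Sum>j'\<le>length q.
      (if length p + length q = i + j then M2 F (take i' p, take j' q) * M2 G (drop i' p, drop j' q) else 0))"
    by (simp add: cp2_def)
  also have "\<dots> = cp2 (lk (beta2 i F)) (lk (beta2 j G)) (p, q)"
    unfolding cp2_def by (auto intro!: sum.cong simp: trm)
  also have "\<dots> = lk (mulDD (beta2 i F) (beta2 j G)) (p, q)"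
    by (simp add: lk_mulDD)
  finally show "lk (beta2 (i + j) (mulBB F G)) pq = lk (mulDD (beta2 i F) (beta2 j G)) pq"
    by (simp add: pq)
qed

lemma filW_filV: "x \<in> filW n \<Longrightarrow> x \<in> filV n"
  by (simp add: filW_def)

lemma filWW_vanish: "F \<in> filWW n \<Longrightarrow> length p + length q < n \<Longrightarrow> M2 F (p, q) = 0"
proof -
  assume "F \<in> filWW n" and l: "length p + length q < n"
  then have "F \<in> addspan {tens a b | a b i j. i + j = n \<and> a \<in> filW i \<and> b \<in> filW j}" by (simp add: filWW_def)
  then show ?thesis
  proof (induction F rule: addspan.induct)
    case zero then show ?case by simp
  next
    case (gen x)
    then obtain a b i j where x: "x = tens a b" "i + j = n" "a \<in> filW i" "b \<in> filW j" by blast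
    have "length p < i \<or> length q < j" using x(2) l by arith
    then show ?case using filV_vanish[OF filW_filV[OF x(3)], of p] filV_vanish[OF filW_filV[OF x(4)], of q]
      by (auto simp: x(1) M2_tens)
  next
    case (add x y) then show ?case by (simp add: M2_add)
  qed
qed


lemma DB_add: "is_DeltaB DB \<Longrightarrow> x \<in> WB \<Longrightarrow> y \<in> WB \<Longrightarrow> DB (x + y) = DB x + DB y"
  by (simp add: is_DeltaB_def)
lemma DB_mul: "is_DeltaB DB \<Longrightarrow> x \<in> WB \<Longrightarrow> y \<in> WB \<Longrightarrow> DB (mulB x y) = mulBB (DB x) (DB y)"
  by (simp add: is_DeltaB_def)
lemma DB_smult: "is_DeltaB DB \<Longrightarrow> x \<in> WB \<Longrightarrow> DB (smult c x) = smult c (DB x)"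
  by (simp add: is_DeltaB_def)
lemma DB_one: "is_DeltaB DB \<Longrightarrow> DB oneB = tens oneB oneB"
  by (simp add: is_DeltaB_def)
lemma DB_gen: "is_DeltaB DB \<Longrightarrow> DB (genB n) = tens (genB n) oneB + tens oneB (genB n)
                            - csum 1 (n - 1) (\<lambda>k. tens (genB k) (genB (n - k)))"
  by (simp add: is_DeltaB_def)
lemma DB_filt: "is_DeltaB DB \<Longrightarrow> x \<in> filW n \<Longrightarrow> DB x \<in> filWW n"
  by (simp add: is_DeltaB_def)

lemma DB_zero: "is_DeltaB DB \<Longrightarrow> DB 0 = 0"
  using DB_add[of DB 0 0] WB_zero by simp

lemma DB_sum: "is_DeltaB DB \<Longrightarrow> (\<And>i. i \<in> I \<Longrightarrow> X i \<in> WB) \<Longrightarrow> DB (\<Sum>i\<in>I. X i) = (\<Sum>i\<in>I. DB (X i))"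
proof (induction I rule: infinite_finite_induct)
  case (infinite A) then show ?case by (simp add: DB_zero)
next
  case empty then show ?case by (simp add: DB_zero)
next
  case (insert a A)
  then show ?case by (simp add: DB_add WB_sum)
qed

lemma DB_diff: "is_DeltaB DB \<Longrightarrow> x \<in> WB \<Longrightarrow> y \<in> WB \<Longrightarrow> DB (x - y) = DB x - DB y"
  using DB_add[of DB "x - y" y] WB_diff[of x y] by simp

lemma DB_vanish: "is_DeltaB DB \<Longrightarrow> x \<in> filW n \<Longrightarrow> length p + length q < n \<Longrightarrow> M2 (DB x) (p, q) = 0"
  by (rule filWW_vanish[OF DB_filt])

lemma WDR_intro: "smult c oneD + mulD y e1 \<in> WDR"
  by (auto simp: WDR_def)

lemma mulD_single: "mulD (Poly_Mapping.single u a) (Poly_Mapping.single v b) = Poly_Mapping.single (u @ v) (a * b)"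
  by (simp add: mulD_def conv_single)

lemma single_WDR: "w = [] \<or> last w = True \<Longrightarrow> Poly_Mapping.single w c \<in> WDR"
proof -
  assume h: "w = [] \<or> last w = True"
  show ?thesis
  proof (cases "w = []")
    case True
    have "Poly_Mapping.single w c = smult c oneD + mulD 0 e1"
      using True by (simp add: oneD_def smult_single mulD_def)
    then show ?thesis using WDR_intro by metis
  next
    case False
    then have w: "w = butlast w @ [True]" using h by (metis append_butlast_last_id)
    have "Poly_Mapping.single w c = smult 0 oneD + mulD (Poly_Mapping.single (butlast w) c) e1"
      by (simp add: e1_def mulD_single w[symmetric])
    then show ?thesis using WDR_intro by metis
  qed
qed

lemma WDR_zero: "0 \<in> WDR"
  using WDR_intro[of 0 0] by (simp add: mulD_def)

lemma WDR_add: "x \<in> WDR \<Longrightarrow> y \<in> WDR \<Longrightarrow> x + y \<in> WDR"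
proof -
  assume "x \<in> WDR" "y \<in> WDR"
  then obtain c z d z' where "x = smult c oneD + mulD z e1" "y = smult d oneD + mulD z' e1"
    by (auto simp: WDR_def)
  then have "x + y = smult (c + d) oneD + mulD (z + z') e1"
    by (simp add: smult_add_left mulD_def conv_add1 algebra_simps)
  then show ?thesis using WDR_intro by metis
qed

lemma WDR_sum: "(\<And>i. i \<in> I \<Longrightarrow> X i \<in> WDR) \<Longrightarrow> (\<Sum>i\<in>I. X i) \<in> WDR"
  by (induction I rule: infinite_finite_induct) (auto intro: WDR_add WDR_zero)

lemma DD_add: "is_DeltaDR DD \<Longrightarrow> x \<in> WDR \<Longrightarrow> y \<in> WDR \<Longrightarrow> DD (x + y) = DD x + DD y"
  by (simp add: is_DeltaDR_def)
lemma DD_mul: "is_DeltaDR DD \<Longrightarrow> x \<in> WDR \<Longrightarrow> y \<in> WDR \<Longrightarrow> DD (mulD x y) = mulDD (DD x) (DD y)"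
  by (simp add: is_DeltaDR_def)
lemma DD_smult: "is_DeltaDR DD \<Longrightarrow> x \<in> WDR \<Longrightarrow> DD (smult c x) = smult c (DD x)"
  by (simp add: is_DeltaDR_def)
lemma DD_one: "is_DeltaDR DD \<Longrightarrow> DD oneD = tens oneD oneD"
  by (simp add: is_DeltaDR_def)
lemma DD_gen: "is_DeltaDR DD \<Longrightarrow> DD (genD n) = tens (genD n) oneD + tens oneD (genD n)
                       - (\<Sum>k<n. tens (genD k) (genD (n - k - 1)))"
  by (simp add: is_DeltaDR_def)

lemma DD_zero: "is_DeltaDR DD \<Longrightarrow> DD 0 = 0"
  using DD_add[of DD 0 0] WDR_zero by simp

lemma DD_sum: "is_DeltaDR DD \<Longrightarrow> (\<And>i. i \<in> I \<Longrightarrow> X i \<in> WDR) \<Longrightarrow> DD (\<Sum>i\<in>I. X i) = (\<Sum>i\<in>I. DD (X i))"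
proof (induction I rule: infinite_finite_induct)
  case (infinite A) then show ?case by (simp add: DD_zero)
next
  case empty then show ?case by (simp add: DD_zero)
next
  case (insert a A)
  then show ?case by (simp add: DD_add WDR_sum)
qed

section \<open>The generator computation\<close>

lemma M2_csum: "M2 (csum a b F) x = csum a b (\<lambda>j. M2 (F j) x)"
  by (simp add: csum_def M2_sum M2_neg)

lemma csum_nat: "csum 1 (int k - 1) f = (if k = 0 then - f 0 else (\<Sum>j\<in>{1..k-1}. f (int j)))"
proof (cases "k = 0")
  case True then show ?thesis by (simp add: csum_def)
next
  case False
  then have "{1..int k - 1} = int ` {1..k-1}" by (simp add: image_int_atLeastAtMost of_nat_diff)
  then have "(\<Sum>j\<in>{1..int k - 1}. f j) = (\<Sum>j\<in>{1..k-1}. f (int j))"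
    by (simp add: sum.reindex)
  then show ?thesis using False by (simp add: csum_def)
qed

lemma DB_ugen: "is_DeltaB DB \<Longrightarrow> DB (ugen m) = (\<Sum>k\<le>m. smult ((-1)^(m-k) * of_nat (m choose k)) (DB (genB (int k))))"
  unfolding ugen_def by (simp add: DB_sum WB_smult genB_WB DB_smult)

lemma one1_eq: "Mg oneB w = (if w = [] then 1 else 0)"
  by (simp add: Mg_oneB one1_def)

definition Cx :: "nat \<Rightarrow> bool list \<Rightarrow> bool list \<Rightarrow> 'k::comm_ring_1" where
  "Cx k p q = (if (\<exists>a. p = blk a) \<and> (\<exists>b. q = blk b) then Sx (length p - 1) (length q - 1) k else 0)"

lemma M2_DB_genB:
  assumes DB: "is_DeltaB DB"
  shows "M2 (DB (genB (int k))) (p, q) = Mg (genB (int k)) p * (if q = [] then 1 else 0) + (if p = [] then 1 else 0) * Mg (genB (int k)) q - Cx k p q"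
proof -
  define f where "f = (\<lambda>j. M2 (tens (genB j) (genB (int k - j))) (p, q) :: 'a)"
  have fj: "f (int j) = Mg (genB (int j)) p * Mg (genB (int (k - j))) q" if "j \<le> k" for j
    unfolding f_def M2_tens of_nat_diff[OF that] by (rule refl)
  have c: "csum 1 (int k - 1) f = Cx k p q"
  proof (cases "(\<exists>a. p = blk a) \<and> (\<exists>b. q = blk b)")
    case False
    have z: "f (int j) = 0" if "j \<le> k" for j
      using False unfolding fj[OF that] Mg_genB by auto
    have z0: "f 0 = 0" using z[of 0] by simp
    have "csum 1 (int k - 1) f = 0"
      unfolding csum_nat using z z0 by (auto intro!: sum.neutral)
    then show ?thesis using False by (auto simp: Cx_def)
  next
    case True
    then obtain a b where ab: "p = blk a" "q = blk b" by blast
    have e: "f (int j) = of_nat (j choose a) * of_nat ((k - j) choose b)" if "j \<le> k" for j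
      by (simp add: fj[OF that] Mg_genB ab blk_inj)
    have e0: "f 0 = of_nat (0 choose a) * of_nat (0 choose b)" if "k = 0"
      using e[of 0] that by simp
    have "csum 1 (int k - 1) f = Sx a b k"
    proof (cases "k = 0")
      case True then show ?thesis unfolding csum_nat Sx_def using e0 by simp
    next
      case False
      have "(\<Sum>j\<in>{1..k-1}. f (int j)) = (\<Sum>j\<in>{1..k-1}. of_nat (j choose a) * of_nat ((k - j) choose b))"
        by (intro sum.cong refl) (rule e, auto)
      then show ?thesis unfolding csum_nat Sx_def using False by simp
    qed
    then show ?thesis using True by (simp add: Cx_def ab)
  qed
  have "M2 (DB (genB (int k))) (p, q) = Mg (genB (int k)) p * Mg oneB q + Mg oneB p * Mg (genB (int k)) q - csum 1 (int k - 1) f"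
    by (simp only: DB_gen[OF DB] M2_diff M2_add M2_tens M2_csum f_def)
  then show ?thesis by (simp add: c one1_eq)
qed

lemma lk_oneD: "lk oneD w = (if w = [] then 1 else 0)"
  by (simp add: oneD_def lk_single)

lemma genD_blk: "genD m = Poly_Mapping.single (blk m) 1"
  by (simp add: genD_def blk_def)

lemma blk_ne[simp]: "blk a \<noteq> []" "[] \<noteq> blk a"
  by (auto simp: blk_def)

lemma U4:
  assumes DB: "is_DeltaB DB" and DD: "is_DeltaDR DD"
  shows "beta2 (Suc m) (DB (ugen m)) = DD (genD m)"
proof (rule poly_mapping_eqI)
  fix pq :: "bool list \<times> bool list"
  obtain p q where pq: "pq = (p, q)" by (cases pq)
  let ?e = "\<lambda>k. (-1)^(m-k) * of_nat (m choose k)"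
  have rhs: "lk (DD (genD m)) (p, q) = (if p = blk m then 1 else 0) * (if q = [] then 1 else 0) + (if p = [] then 1 else 0) * (if q = blk m then 1 else 0)
      - (\<Sum>k<m. (if p = blk k then 1 else 0) * (if q = blk (m - k - 1) then 1 else 0))"
    unfolding DD_gen[OF DD] by (simp only: lookup_minus lookup_add lk_tens lookup_sum genD_blk lk_single lk_oneD)
  show "lk (beta2 (Suc m) (DB (ugen m))) pq = lk (DD (genD m)) pq"
  proof (cases "length p + length q = Suc m")
    case False
    have "(\<Sum>k<m. (if p = blk k then 1 else 0) * (if q = blk (m - k - 1) then 1 else (0::'a))) = 0"
      using False by (intro sum.neutral) auto
    then have "lk (DD (genD m)) (p, q) = 0" using False unfolding rhs by auto
    then show ?thesis using False by (simp add: pq lk_beta2)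
  next
    case True
    have "M2 (DB (ugen m)) (p, q) = (\<Sum>k\<le>m. ?e k * M2 (DB (genB (int k))) (p, q))"
      by (simp add: DB_ugen[OF DB] M2_sum M2_smult)
    also have "\<dots> = Mg (ugen m) p * (if q = [] then 1 else 0) + (if p = [] then 1 else 0) * Mg (ugen m) q
        - (\<Sum>k\<le>m. ?e k * Cx k p q)"
      by (simp add: M2_DB_genB[OF DB] ugen_def Mg_sum Mg_smult algebra_simps sum.distrib sum_subtractf
          sum_distrib_left sum_distrib_right)
    also have "(\<Sum>k\<le>m. ?e k * Cx k p q) = (\<Sum>k<m. (if p = blk k then 1 else 0) * (if q = blk (m - k - 1) then 1 else 0))"
    proof (cases "(\<exists>a. p = blk a) \<and> (\<exists>b. q = blk b)")
      case False
      then show ?thesis by (auto simp: Cx_def intro!: sum.neutral)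
    next
      case c: True
      then obtain a b where ab: "p = blk a" "q = blk b" by blast
      then have abm: "a + b + 1 = m" using True by simp
      have "(\<Sum>k\<le>m. ?e k * Cx k p q) = (\<Sum>k\<le>m. ?e k * Sx a b k)"
        by (simp add: Cx_def ab blk_inj)
      also have "\<dots> = 1" using I2[OF abm] by (simp add: mult.assoc)
      also have "\<dots> = (\<Sum>k<m. if k = a then 1 else 0)" using abm by simp
      also have "\<dots> = (\<Sum>k<m. (if p = blk k then 1 else 0) * (if q = blk (m - k - 1) then 1 else 0))"
        using abm by (intro sum.cong refl) (auto simp: ab blk_inj)
      finally show ?thesis .
    qed
    finally have "M2 (DB (ugen m)) (p, q) = lk (DD (genD m)) (p, q)"
      unfolding rhs by (simp add: Mg_ugen)
    then show ?thesis using True by (simp add: pq lk_beta2)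
  qed
qed


section \<open>Products of generators\<close>

fun Yl :: "nat list \<Rightarrow> letter list \<Rightarrow>\<^sub>0 'k::comm_ring_1" where
  "Yl [] = oneB"
| "Yl (m # ms) = mulB (ugen m) (Yl ms)"

fun bw :: "nat list \<Rightarrow> bool list" where
  "bw [] = []"
| "bw (m # ms) = blk m @ bw ms"

lemma Yl_WB: "Yl ms \<in> WB"
  by (induction ms) (auto intro: WB_mul ugen_WB WB_oneB)

lemma cp_deltas: "cp (\<lambda>w. if w = u then 1 else 0) (\<lambda>w. if w = v then 1 else 0) w = (if w = u @ v then 1 else (0::'k::comm_ring_1))"
proof -
  have "cp (\<lambda>w. if w = u then 1 else 0) (\<lambda>w. if w = v then 1 else 0) w
      = (\<Sum>i\<le>length w. if i = length u then (if w = u @ v then 1 else (0::'k)) else 0)"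
    unfolding cp_def
  proof (intro sum.cong refl)
    fix i assume i: "i \<in> {..length w}"
    show "(if take i w = u then 1 else 0) * (if drop i w = v then 1 else 0) = (if i = length u then (if w = u @ v then 1 else (0::'k)) else 0)"
    proof (cases "take i w = u \<and> drop i w = v")
      case True
      then have "w = u @ v" "i = length u" using i by (metis append_take_drop_id, auto)
      then show ?thesis using True by simp
    next
      case False
      have "\<not> (i = length u \<and> w = u @ v)" using False by auto
      then show ?thesis using False by auto
    qed
  qed
  also have "\<dots> = (if w = u @ v then 1 else 0)" by auto
  finally show ?thesis .
qed

lemma Mg_Yl: "Mg (Yl ms :: letter list \<Rightarrow>\<^sub>0 'k::comm_ring_1) = (\<lambda>w. if w = bw ms then 1 else 0)"
proof (induction ms)
  case Nil then show ?case by (simp add: Mg_oneB one1_def fun_eq_iff)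
next
  case (Cons m ms)
  have u: "Mg (ugen m :: letter list \<Rightarrow>\<^sub>0 'k) = (\<lambda>w. if w = blk m then 1 else 0)"
    by (rule ext) (simp add: Mg_ugen)
  show ?case unfolding Yl.simps Mg_mulB Cons.IH u by (simp add: fun_eq_iff cp_deltas)
qed

lemma filV_delta:
  fixes x :: "letter list \<Rightarrow>\<^sub>0 'k::comm_ring_1"
  assumes "x \<in> VB" "\<And>w. Mg x w = (if w = v then 1 else 0)"
  shows "x \<in> filV (length v)"
proof (cases "length v")
  case 0 then show ?thesis using assms by simp
next
  case (Suc n)
  have "x \<in> filV (Suc n)"
    by (rule filV_of_vanish[OF assms(1)]) (use Suc assms(2) in auto)
  then show ?thesis using Suc by simp
qed

lemma Yl_filW: "(Yl ms :: letter list \<Rightarrow>\<^sub>0 'k::comm_ring_1) \<in> filW (length (bw ms))"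
proof -
  have w: "(Yl ms :: letter list \<Rightarrow>\<^sub>0 'k) \<in> WB" by (rule Yl_WB)
  have "(Yl ms :: letter list \<Rightarrow>\<^sub>0 'k) \<in> filV (length (bw ms))"
    by (rule filV_delta[OF WB_VB[OF w]]) (simp add: Mg_Yl)
  then show ?thesis using w by (simp add: filW_iff)
qed

lemma ugen_filW: "(ugen m :: letter list \<Rightarrow>\<^sub>0 'k::comm_ring_1) \<in> filW (Suc m)"
proof -
  have w: "(ugen m :: letter list \<Rightarrow>\<^sub>0 'k) \<in> WB" by (rule ugen_WB)
  have "(ugen m :: letter list \<Rightarrow>\<^sub>0 'k) \<in> filV (length (blk m))"
    by (rule filV_delta[OF WB_VB[OF w]]) (simp add: Mg_ugen)
  then show ?thesis using w by (simp add: filW_iff)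
qed

lemma bw_last: "bw ms = [] \<or> last (bw ms) = True"
  by (induction ms) (auto simp: blk_def)

lemma lk_beta2_0: "lk (beta2 0 F) (p, q) = (if p = [] \<and> q = [] then M2 F ([], []) else 0)"
  by (auto simp: lk_beta2)

lemma Y4:
  assumes DB: "is_DeltaB DB" and DD: "is_DeltaDR DD"
  shows "beta2 (length (bw ms)) (DB (Yl ms)) = DD (Poly_Mapping.single (bw ms) 1)"
proof (induction ms)
  case Nil
  show ?case
  proof (rule poly_mapping_eqI)
    fix pq :: "bool list \<times> bool list"
    obtain p q where pq: "pq = (p, q)" by (cases pq)
    show "lk (beta2 (length (bw [])) (DB (Yl []))) pq = lk (DD (Poly_Mapping.single (bw []) 1)) pq"
      using DD_one[OF DD] DB_one[OF DB]
      by (simp add: pq lk_beta2_0 M2_tens Mg_oneB one1_def lk_tens lk_oneD flip: oneD_def)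
  qed
next
  case (Cons m ms)
  have v1: "M2 (DB (ugen m)) (p, q) = 0" if "length p + length q < Suc m" for p q
    by (rule DB_vanish[OF DB ugen_filW that])
  have v2: "M2 (DB (Yl ms)) (p, q) = 0" if "length p + length q < length (bw ms)" for p q
    by (rule DB_vanish[OF DB Yl_filW that])
  have "beta2 (length (bw (m # ms))) (DB (Yl (m # ms))) = beta2 (Suc m + length (bw ms)) (mulBB (DB (ugen m)) (DB (Yl ms)))"
    by (simp add: DB_mul[OF DB ugen_WB Yl_WB])
  also have "\<dots> = mulDD (beta2 (Suc m) (DB (ugen m))) (beta2 (length (bw ms)) (DB (Yl ms)))"
    by (rule beta2_mul) (use v1 v2 in auto)
  also have "\<dots> = mulDD (DD (genD m)) (DD (Poly_Mapping.single (bw ms) 1))"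
    by (simp add: U4[OF DB DD] Cons.IH)
  also have "\<dots> = DD (mulD (genD m) (Poly_Mapping.single (bw ms) 1))"
  proof (rule DD_mul[OF DD, symmetric])
    show "genD m \<in> WDR" unfolding genD_blk by (rule single_WDR) (simp add: blk_def)
    show "Poly_Mapping.single (bw ms) 1 \<in> WDR" by (rule single_WDR[OF bw_last])
  qed
  also have "\<dots> = DD (Poly_Mapping.single (bw (m # ms)) 1)"
    by (simp add: genD_blk mulD_single)
  finally show ?case .
qed

lemma bw_surj: "w = [] \<or> last w = True \<Longrightarrow> \<exists>ms. bw ms = w"
proof (induction "length w" arbitrary: w rule: less_induct)
  case less
  show ?case
  proof (cases "w = []")
    case True then show ?thesis by (metis bw.simps(1))
  next
    case False
    then have lw: "last w = True" using less.prems by simp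
    have "True \<in> set w" using False lw by (metis last_in_set)
    then have dne: "dropWhile Not w \<noteq> []" by (auto simp: dropWhile_eq_Nil_conv)
    then obtain d rest where dr: "dropWhile Not w = d # rest" by (cases "dropWhile Not w") auto
    have "d = True" using hd_dropWhile[OF dne] dr by simp
    have tw: "takeWhile Not w = replicate (length (takeWhile Not w)) False"
      by (rule replicate_length_same[symmetric]) (auto dest: set_takeWhileD)
    define a where "a = length (takeWhile Not w)"
    have w: "w = blk a @ rest"
    proof -
      have "w = takeWhile Not w @ dropWhile Not w" by simp
      also have "\<dots> = blk a @ rest" using tw dr \<open>d = True\<close> by (simp add: blk_def a_def)
      finally show ?thesis .
    qed
    have "length rest < length w" using w by simp
    moreover have "rest = [] \<or> last rest = True"
      using lw w by (cases "rest = []") auto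
    ultimately obtain ms where "bw ms = rest" using less.hyps by blast
    then have "bw (a # ms) = w" using w by simp
    then show ?thesis by blast
  qed
qed


theorem corollary3p20:
  fixes DB :: "(letter list \<Rightarrow>\<^sub>0 'k::comm_ring_1) \<Rightarrow> (letter list \<times> letter list \<Rightarrow>\<^sub>0 'k)"
    and DD :: "(bool list \<Rightarrow>\<^sub>0 'k) \<Rightarrow> (bool list \<times> bool list \<Rightarrow>\<^sub>0 'k)"
  assumes Qalg: "\<And>m::nat. m > 0 \<Longrightarrow> \<exists>u::'k. of_nat m * u = 1"
    and DB: "is_DeltaB DB"
    and DD: "is_DeltaDR DD"
  shows "\<forall>n. \<forall>x\<in>filW n. DD (beta1 n x) = beta2 n (DB x)"
proof (intro allI ballI)
  fix n and x :: "letter list \<Rightarrow>\<^sub>0 'k"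
  assume xf: "x \<in> filW n"
  have xW: "x \<in> WB" and xV: "x \<in> filV n" using xf by (simp_all add: filW_iff)
  define S where "S = {w :: bool list. length w = n \<and> (w = [] \<or> last w = True)}"
  have finS: "finite S" using finite_len_eq[of n] by (rule finite_subset[rotated]) (auto simp: S_def)
  define msf where "msf w = (SOME ms. bw ms = w)" for w
  have msf: "bw (msf w) = w" if "w \<in> S" for w
  proof -
    have "\<exists>ms. bw ms = w" using that by (intro bw_surj) (auto simp: S_def)
    then show ?thesis unfolding msf_def by (rule someI_ex)
  qed
  define c where "c w = Mg x w" for w
  define y where "y = (\<Sum>w\<in>S. smult (c w) (Yl (msf w) :: letter list \<Rightarrow>\<^sub>0 'k))"
  have yW: "y \<in> WB" unfolding y_def by (intro WB_sum WB_smult Yl_WB)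
  have xsupp: "Mg x w = 0" if "w \<noteq> []" "last w \<noteq> True" for w
  proof -
    obtain c0 z where z: "z \<in> VB" "x = smult c0 oneB + mulB z (X1 - oneB)" using xW by (auto simp: WB_iff)
    have "Mg x w = c0 * one1 w + cp (Mg z) (\<lambda>w. if w = [True] then 1 else 0) w"
      by (simp add: z Mg_add Mg_smult Mg_oneB Mg_mulB Mg_b1)
    also have "\<dots> = 0" using that by (simp add: one1_def cp_delta_right)
    finally show ?thesis .
  qed
  have My: "Mg y w = (if w \<in> S then c w else 0)" for w
  proof -
    have "Mg y w = (\<Sum>w'\<in>S. c w' * (if w = bw (msf w') then 1 else 0))"
      by (simp add: y_def Mg_sum Mg_smult Mg_Yl)
    also have "\<dots> = (\<Sum>w'\<in>S. if w = w' then c w' else 0)"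
      by (intro sum.cong refl) (simp add: msf)
    also have "\<dots> = (if w \<in> S then c w else 0)" using finS by simp
    finally show ?thesis .
  qed
  have b1: "beta1 n x = (\<Sum>w\<in>S. Poly_Mapping.single w (c w))"
  proof (rule poly_mapping_eqI)
    fix w
    have "lk (\<Sum>w\<in>S. Poly_Mapping.single w (c w)) w = (\<Sum>w'\<in>S. if w = w' then c w' else 0)"
      by (simp add: lookup_sum lk_single)
    also have "\<dots> = (if w \<in> S then c w else 0)" using finS by simp
    also have "\<dots> = lk (beta1 n x) w"
      using xsupp[of w] by (auto simp: lk_beta1 S_def c_def)
    finally show "lk (beta1 n x) w = lk (\<Sum>w\<in>S. Poly_Mapping.single w (c w)) w" by simp
  qed
  have dW: "x - y \<in> filW (Suc n)"
  proof -
    have "x - y \<in> filV (Suc n)"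
    proof (rule filV_of_vanish)
      show "x - y \<in> VB" using xW yW by (intro VB_diff WB_VB)
      fix w :: "bool list" assume lw: "length w \<le> n"
      show "Mg (x - y) w = 0"
      proof (cases "length w < n")
        case True
        then have "Mg x w = 0" by (rule filV_vanish[OF xV])
        moreover have "w \<notin> S" using True by (auto simp: S_def)
        ultimately show ?thesis by (simp add: Mg_diff My)
      next
        case False
        then have "length w = n" using lw by simp
        then show ?thesis using xsupp[of w] by (auto simp: Mg_diff My S_def c_def)
      qed
    qed
    then show ?thesis using xW yW by (simp add: filW_iff WB_diff)
  qed
  have e0: "beta2 n (DB (x - y)) = 0"
    by (rule beta2_vanish) (rule DB_vanish[OF DB dW], simp)
  have DBx: "DB x = DB (x - y) + DB y"
    using DB_add[OF DB, of "x - y" y] WB_diff[OF xW yW] yW by simp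
  have Yw: "beta2 n (DB (Yl (msf w))) = DD (Poly_Mapping.single w 1)" if "w \<in> S" for w
  proof -
    have "n = length (bw (msf w))" using that msf[OF that] by (simp add: S_def)
    then show ?thesis using Y4[OF DB DD, of "msf w"] msf[OF that] by simp
  qed
  have ey: "beta2 n (DB y) = (\<Sum>w\<in>S. smult (c w) (DD (Poly_Mapping.single w 1)))"
  proof -
    have "DB y = (\<Sum>w\<in>S. smult (c w) (DB (Yl (msf w))))"
      unfolding y_def by (simp add: DB_sum[OF DB] WB_smult Yl_WB DB_smult[OF DB])
    then have "beta2 n (DB y) = (\<Sum>w\<in>S. smult (c w) (beta2 n (DB (Yl (msf w)))))"
      by (simp add: beta2_sum beta2_smult)
    also have "\<dots> = (\<Sum>w\<in>S. smult (c w) (DD (Poly_Mapping.single w 1)))"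
      by (intro sum.cong refl) (simp add: Yw)
    finally show ?thesis .
  qed
  have ex: "DD (beta1 n x) = (\<Sum>w\<in>S. smult (c w) (DD (Poly_Mapping.single w 1)))"
  proof -
    have sW: "Poly_Mapping.single w e \<in> WDR" if "w \<in> S" for w e
      using that by (intro single_WDR) (auto simp: S_def)
    have "DD (beta1 n x) = (\<Sum>w\<in>S. DD (Poly_Mapping.single w (c w)))"
      unfolding b1 by (rule DD_sum[OF DD sW])
    also have "\<dots> = (\<Sum>w\<in>S. smult (c w) (DD (Poly_Mapping.single w 1)))"
    proof (intro sum.cong refl)
      fix w assume w: "w \<in> S"
      have "Poly_Mapping.single w (c w) = smult (c w) (Poly_Mapping.single w 1)" by (simp add: smult_single)
      then show "DD (Poly_Mapping.single w (c w)) = smult (c w) (DD (Poly_Mapping.single w 1))"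
        using DD_smult[OF DD sW[OF w]] by simp
    qed
    finally show ?thesis .
  qed
  show "DD (beta1 n x) = beta2 n (DB x)"
    by (simp add: DBx beta2_add e0 ey ex)
qed

end
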